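(* Let $\epsilon\in\{-1,0,1\}$ and assume $\alpha_0>2\eta_0$ (equivalently $C_0^2<\tfrac12$ with $C_0:=(\eta_0/\alpha_0)^{1/2}$). Then there exists $C_{\mathrm{sta}}>0$, depending only on $C_0$ (hence independent of $h$, of the contrast $\kappa_{\max}/\kappa_{\min}$, and of $C_T$), such that $$a_h^{(\epsilon)}(v_h,v_h)\ge C_{\mathrm{sta}}\,|\!|\!|v_h|\!|\!|^2\qquad\forall v_h\in V_h.$$
   Context: Setting. Let $\Omega\subset\mathbb R^d$, $d\in\{2,3\}$, be a bounded polyhedral Lipschitz domain. Let $\kappa:\Omega\to\mathbb R^{d\times d}$ be symmetric with $\kappa_{\min}|\xi|^2\le\xi^\top\kappa(x)\xi\le\kappa_{\max}|\xi|^2$ for all $\xi\in\mathbb R^d$ and a.e. $x$, where $0<\kappa_{\min}\le\kappa_{\max}<\infty$. Let $\mathcal T_h$ be a conforming affine simplicial mesh of $\Omega$ from a shape-regular family, with $h_E=\operatorname{diam}E$, $h=\max_Eh_E\le1$, and assume $\kappa$ is constant on each element, $\kappa_E:=\kappa|_E$. $\mathcal F_h=\mathcal F_h^i\cup\mathcal F_h^b$ is the set of faces (edges if $d=2$), split into interior and boundary faces; $\mathcal F_E$ is the set of faces of $E$, $n_{E,F}$ the unit outward normal to $F\in\mathcal F_E$, and $\eta_0:=\max_E\#\mathcal F_E$. For an interior face $F=\partial E_1\cap\partial E_2$, a subscript $i\in\{1,2\}$ denotes the trace from $E_i$ and $n_i:=n_{E_i,F}$. $\nabla_h$ is the elementwise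 gradient; $(\cdot,\cdot)_{\mathcal T_h}:=\sum_E(\cdot,\cdot)_{L^2(E)}$, $\langle\cdot,\cdot\rangle_{\mathcal F}:=\sum_{F\in\mathcal F}\langle\cdot,\cdot\rangle_{L^2(F)}$ for a set $\mathcal F$ of faces; $H^2(\mathcal T_h)$ is the broken Sobolev space. Fix $k\ge1$: $V_h:=\{v\in L^2(\Omega):v|_E\in\mathbb P_k(E)\ \forall E\}$. Trace operators. For an interior face and a pair of weights $(\omega_1,\omega_2)$ with $\omega_1+\omega_2=1$ (boundary faces: $(1,0)$): $[\varphi]:=\varphi_1n_1+\varphi_2n_2$, $\{\varphi\}^*_\omega:=\omega_2\varphi_1+\omega_1\varphi_2$; on a boundary face $F\subset\partial E$: $[\varphi]:=\varphi|_En_{E,F}$, $\{\varphi\}^*_\omega:=\varphi|_E$. Means of vector fields are componentwise; for a vector field $\mathbf b$, $[\mathbf b]:=\mathbf b_1\cdot n_1+\mathbf b_2\cdot n_2$ (scalar) on interior faces. Penalty and coefficients. Let $C_T>0$ be such that $\|w\|_{L^2(F)}^2\le C_T^2h_E^{-1}\|w\|_{L^2(E)}^2$ for all $E$, $F\in\mathcal F_E$, $w\in\mathbb P_k(E)$. Fix $\alpha_0>0$ and set $\tau|_{E,F}:=\alpha_0C_T^2\kappa_{E,F}h_E^{-1}$ with $\kappa_{E,F}:=n_{E,F}^\top\kappa_En_{E,F}$. On an interior face with $\tau_i:=\tau|_{E_i,F}$: $\omega^\tau_i:=\tau_i/(\tau_1+\tau_2)$, $\varrho_0:=\tau_1\tau_2/(\tau_1+\tau_2)$,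 $\varrho_1:=1/(\tau_1+\tau_2)$; on a boundary face $F\subset\partial E$: $\omega^\tau:=(1,0)$, $\varrho_0:=\tau|_{E,F}$. UIP-DG method. For $u,v$ with $u|_E,v|_E\in H^2(E)$ for all $E$: $a_h^{(\epsilon)}(u,v):=(\kappa\nabla_hu,\nabla_hv)_{\mathcal T_h}+a^c_h(u,v)+\epsilon\,a^c_h(v,u)+s^{(\epsilon)}_h(u,v)$, where $a^c_h(u,v):=-\langle\{\kappa\nabla_hu\}^*_{\omega^\tau},[v]\rangle_{\mathcal F_h}$ and $s_h^{(\epsilon)}(u,v):=\langle\varrho_0[u],[v]\rangle_{\mathcal F_h}-\epsilon\langle\varrho_1[\kappa\nabla_hu],[\kappa\nabla_hv]\rangle_{\mathcal F_h^i}$. Norms. $|v|_{0,h}^2:=\sum_{F\in\mathcal F_h}\|\varrho_0^{1/2}[v]\|_{L^2(F)}^2$, $|\!|\!|v|\!|\!|^2:=\sum_E\|\kappa^{1/2}\nabla v\|_{L^2(E)}^2+|v|_{0,h}^2$. *)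

theory Defs
  imports "HOL-Analysis.Analysis"
begin

type_synonym 'n pt = "real ^ 'n"
type_synonym 'n smplx = "('n pt) set"   (* a smplx / face given by its vertex set *)
type_synonym 'n dgfun = "'n smplx \<Rightarrow> ('n pt \<Rightarrow> real)"  (* broken function: one function per element *)

definition lipschitz_domain :: "'n::finite pt set \<Rightarrow> bool" where
  "lipschitz_domain \<Omega> \<longleftrightarrow> open \<Omega> \<and> bounded \<Omega> \<and> connected \<Omega> \<and> \<Omega> \<noteq> {} \<and>
     (\<forall>x\<in>frontier \<Omega>. \<exists>r>0. \<exists>e::'n pt. \<exists>g::'n pt \<Rightarrow> real. \<exists>L. norm e = 1 \<and>
        L-lipschitz_on {y. y \<bullet> e = 0} g \<and>
        \<Omega> \<inter> ball x r = {y \<in> ball x r. y \<bullet> e < g (y - (y \<bullet> e) *\<^sub>R e)} \<and>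
        frontier \<Omega> \<inter> ball x r = {y \<in> ball x r. y \<bullet> e = g (y - (y \<bullet> e) *\<^sub>R e)})"


definition is_simplex :: "'n::finite smplx \<Rightarrow> bool" where
  "is_simplex E \<longleftrightarrow> card E = CARD('n) + 1 \<and> \<not> affine_dependent E"

definition conforming_mesh :: "'n::finite smplx set \<Rightarrow> 'n pt set \<Rightarrow> bool" where
  "conforming_mesh T \<Omega> \<longleftrightarrow> finite T \<and> T \<noteq> {} \<and> (\<forall>E\<in>T. is_simplex E) \<and>
     (\<Union>E\<in>T. convex hull E) = closure \<Omega> \<and>
     (\<forall>E1\<in>T. \<forall>E2\<in>T. E1 \<noteq> E2 \<longrightarrow> convex hull E1 \<inter> convex hull E2 = convex hull (E1 \<inter> E2))"

definition faces_of :: "'n::finite smplx \<Rightarrow> 'n smplx set" where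
  "faces_of E = {F. F \<subseteq> E \<and> card F = CARD('n)}"

definition mesh_faces :: "'n::finite smplx set \<Rightarrow> 'n smplx set" where
  "mesh_faces T = (\<Union>E\<in>T. faces_of E)"

definition adj :: "'n::finite smplx set \<Rightarrow> 'n smplx \<Rightarrow> 'n smplx set" where
  "adj T F = {E\<in>T. F \<subseteq> E}"

definition interior_faces :: "'n::finite smplx set \<Rightarrow> 'n smplx set" where
  "interior_faces T = {F\<in>mesh_faces T. card (adj T F) = 2}"

definition boundary_faces :: "'n::finite smplx set \<Rightarrow> 'n smplx set" where
  "boundary_faces T = {F\<in>mesh_faces T. card (adj T F) = 1}"

definition hE :: "'n::finite smplx \<Rightarrow> real" where
  "hE E = diameter (convex hull E)"

definition hmax :: "'n::finite smplx set \<Rightarrow> real" where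
  "hmax T = Max (hE ` T)"

definition eta0 :: "'n::finite smplx set \<Rightarrow> nat" where
  "eta0 T = Max ((\<lambda>E. card (faces_of E)) ` T)"

definition nrm :: "'n::finite smplx \<Rightarrow> 'n smplx \<Rightarrow> 'n pt" where
  "nrm E F = (SOME n. norm n = 1 \<and> (\<forall>a\<in>F. \<forall>b\<in>F. (a - b) \<bullet> n = 0) \<and>
                      (\<forall>a\<in>F. \<forall>p\<in>E - F. (p - a) \<bullet> n < 0))"

definition elem_int :: "'n::finite smplx \<Rightarrow> ('n pt \<Rightarrow> real) \<Rightarrow> real" where
  "elem_int E f = integral (convex hull E) f"

text \<open>Surface integral over the flat face F (with unit normal n): the (d-1)-dimensional
 integral of f over F equals the d-dimensional integral over the unit-height right prism
 F + [0,1] n of f composed with the orthogonal projection onto the face hyperplane.\<close>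
definition face_int :: "'n::finite smplx \<Rightarrow> 'n pt \<Rightarrow> ('n pt \<Rightarrow> real) \<Rightarrow> real" where
  "face_int F n f = (let a = (SOME a. a \<in> F) in
     integral {y + t *\<^sub>R n | y t. y \<in> convex hull F \<and> t \<in> {0..1}}
              (\<lambda>x. f (x - ((x - a) \<bullet> n) *\<^sub>R n)))"

definition fnrm :: "'n::finite smplx set \<Rightarrow> 'n smplx \<Rightarrow> 'n pt" where
  "fnrm T F = nrm (SOME E. E \<in> adj T F) F"

definition fint :: "'n::finite smplx set \<Rightarrow> 'n smplx \<Rightarrow> ('n pt \<Rightarrow> real) \<Rightarrow> real" where
  "fint T F f = face_int F (fnrm T F) f"

definition poly_deg :: "nat \<Rightarrow> ('n::finite pt \<Rightarrow> real) \<Rightarrow> bool" where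
  "poly_deg k p \<longleftrightarrow> (\<exists>c :: ('n \<Rightarrow> nat) \<Rightarrow> real. \<forall>x.
      p x = (\<Sum>\<alpha>\<in>{\<alpha>. sum \<alpha> UNIV \<le> k}. c \<alpha> * (\<Prod>i\<in>UNIV. (x $ i) ^ \<alpha> i)))"

definition grad :: "('n::finite pt \<Rightarrow> real) \<Rightarrow> 'n pt \<Rightarrow> 'n pt" where
  "grad f x = (SOME g. (f has_derivative (\<lambda>h. g \<bullet> h)) (at x))"

definition Vh :: "nat \<Rightarrow> 'n::finite smplx set \<Rightarrow> 'n dgfun set" where
  "Vh k T = {v. \<forall>E\<in>T. poly_deg k (v E)}"

type_synonym 'n coef = "'n smplx \<Rightarrow> real ^ 'n ^ 'n"

definition kEF :: "'n::finite coef \<Rightarrow> 'n smplx \<Rightarrow> 'n smplx \<Rightarrow> real" where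
  "kEF K E F = nrm E F \<bullet> (K E *v nrm E F)"

definition tau :: "real \<Rightarrow> real \<Rightarrow> 'n::finite coef \<Rightarrow> 'n smplx \<Rightarrow> 'n smplx \<Rightarrow> real" where
  "tau \<alpha>0 CT K E F = \<alpha>0 * CT\<^sup>2 * kEF K E F / hE E"

definition tauS :: "'n::finite smplx set \<Rightarrow> real \<Rightarrow> real \<Rightarrow> 'n coef \<Rightarrow> 'n smplx \<Rightarrow> real" where
  "tauS T \<alpha>0 CT K F = (\<Sum>E\<in>adj T F. tau \<alpha>0 CT K E F)"

definition rho0 :: "'n::finite smplx set \<Rightarrow> real \<Rightarrow> real \<Rightarrow> 'n coef \<Rightarrow> 'n smplx \<Rightarrow> real" where
  "rho0 T \<alpha>0 CT K F =
     (if F \<in> boundary_faces T then tau \<alpha>0 CT K (THE E. E \<in> adj T F) F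
      else (\<Prod>E\<in>adj T F. tau \<alpha>0 CT K E F) / tauS T \<alpha>0 CT K F)"

definition rho1 :: "'n::finite smplx set \<Rightarrow> real \<Rightarrow> real \<Rightarrow> 'n coef \<Rightarrow> 'n smplx \<Rightarrow> real" where
  "rho1 T \<alpha>0 CT K F = 1 / tauS T \<alpha>0 CT K F"

definition jmp :: "'n::finite smplx set \<Rightarrow> 'n dgfun \<Rightarrow> 'n smplx \<Rightarrow> 'n pt \<Rightarrow> 'n pt" where
  "jmp T v F x = (\<Sum>E\<in>adj T F. v E x *\<^sub>R nrm E F)"

definition jmpv :: "'n::finite smplx set \<Rightarrow> ('n smplx \<Rightarrow> 'n pt \<Rightarrow> 'n pt) \<Rightarrow> 'n smplx \<Rightarrow> 'n pt \<Rightarrow> real" where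
  "jmpv T b F x = (\<Sum>E\<in>adj T F. b E x \<bullet> nrm E F)"

text \<open>Weighted mean with weights omega^tau: on an interior face
 tau2/(tau1+tau2) phi1 + tau1/(tau1+tau2) phi2; on a boundary face the one-sided trace.\<close>
definition wavg :: "'n::finite smplx set \<Rightarrow> real \<Rightarrow> real \<Rightarrow> 'n coef \<Rightarrow>
     ('n smplx \<Rightarrow> 'n pt \<Rightarrow> 'n pt) \<Rightarrow> 'n smplx \<Rightarrow> 'n pt \<Rightarrow> 'n pt" where
  "wavg T \<alpha>0 CT K b F x =
     (if F \<in> boundary_faces T then b (THE E. E \<in> adj T F) x
      else (\<Sum>E\<in>adj T F. ((tauS T \<alpha>0 CT K F - tau \<alpha>0 CT K E F) / tauS T \<alpha>0 CT K F) *\<^sub>R b E x))"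

definition kgrad :: "'n::finite coef \<Rightarrow> 'n dgfun \<Rightarrow> 'n smplx \<Rightarrow> 'n pt \<Rightarrow> 'n pt" where
  "kgrad K u E x = K E *v grad (u E) x"

definition a_vol :: "'n::finite smplx set \<Rightarrow> 'n coef \<Rightarrow> 'n dgfun \<Rightarrow> 'n dgfun \<Rightarrow> real" where
  "a_vol T K u v = (\<Sum>E\<in>T. elem_int E (\<lambda>x. kgrad K u E x \<bullet> grad (v E) x))"

definition a_c :: "'n::finite smplx set \<Rightarrow> real \<Rightarrow> real \<Rightarrow> 'n coef \<Rightarrow> 'n dgfun \<Rightarrow> 'n dgfun \<Rightarrow> real" where
  "a_c T \<alpha>0 CT K u v = - (\<Sum>F\<in>mesh_faces T.
      fint T F (\<lambda>x. wavg T \<alpha>0 CT K (kgrad K u) F x \<bullet> jmp T v F x))"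

definition s_h :: "real \<Rightarrow> 'n::finite smplx set \<Rightarrow> real \<Rightarrow> real \<Rightarrow> 'n coef \<Rightarrow> 'n dgfun \<Rightarrow> 'n dgfun \<Rightarrow> real" where
  "s_h \<epsilon> T \<alpha>0 CT K u v =
     (\<Sum>F\<in>mesh_faces T. fint T F (\<lambda>x. rho0 T \<alpha>0 CT K F * (jmp T u F x \<bullet> jmp T v F x)))
     - \<epsilon> * (\<Sum>F\<in>interior_faces T. fint T F (\<lambda>x. rho1 T \<alpha>0 CT K F *
            (jmpv T (kgrad K u) F x * jmpv T (kgrad K v) F x)))"

definition a_h :: "real \<Rightarrow> 'n::finite smplx set \<Rightarrow> real \<Rightarrow> real \<Rightarrow> 'n coef \<Rightarrow> 'n dgfun \<Rightarrow> 'n dgfun \<Rightarrow> real" where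
  "a_h \<epsilon> T \<alpha>0 CT K u v = a_vol T K u v + a_c T \<alpha>0 CT K u v + \<epsilon> * a_c T \<alpha>0 CT K v u
      + s_h \<epsilon> T \<alpha>0 CT K u v"

definition seminorm0_sq :: "'n::finite smplx set \<Rightarrow> real \<Rightarrow> real \<Rightarrow> 'n coef \<Rightarrow> 'n dgfun \<Rightarrow> real" where
  "seminorm0_sq T \<alpha>0 CT K v = (\<Sum>F\<in>mesh_faces T. fint T F (\<lambda>x. rho0 T \<alpha>0 CT K F * (norm (jmp T v F x))\<^sup>2))"

text \<open>|kappa^(1/2) grad v|^2 = grad v . (kappa grad v) for symmetric positive definite kappa.\<close>
definition tnorm_sq :: "'n::finite smplx set \<Rightarrow> real \<Rightarrow> real \<Rightarrow> 'n coef \<Rightarrow> 'n dgfun \<Rightarrow> real" where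
  "tnorm_sq T \<alpha>0 CT K v = (\<Sum>E\<in>T. elem_int E (\<lambda>x. grad (v E) x \<bullet> (K E *v grad (v E) x)))
      + seminorm0_sq T \<alpha>0 CT K v"

definition coef_ok :: "'n::finite smplx set \<Rightarrow> 'n coef \<Rightarrow> real \<Rightarrow> real \<Rightarrow> bool" where
  "coef_ok T K kmin kmax \<longleftrightarrow> 0 < kmin \<and> kmin \<le> kmax \<and>
     (\<forall>E\<in>T. transpose (K E) = K E \<and>
        (\<forall>\<xi>. kmin * (norm \<xi>)\<^sup>2 \<le> \<xi> \<bullet> (K E *v \<xi>) \<and> \<xi> \<bullet> (K E *v \<xi>) \<le> kmax * (norm \<xi>)\<^sup>2))"

definition trace_const :: "nat \<Rightarrow> 'n::finite smplx set \<Rightarrow> real \<Rightarrow> bool" where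
  "trace_const k T CT \<longleftrightarrow> 0 < CT \<and>
     (\<forall>E\<in>T. \<forall>F\<in>faces_of E. \<forall>w. poly_deg k w \<longrightarrow>
        face_int F (nrm E F) (\<lambda>x. (w x)\<^sup>2) \<le> CT\<^sup>2 / hE E * elem_int E (\<lambda>x. (w x)\<^sup>2))"

end

theory Submission
  imports Defs
begin

definition mnm :: "('n::finite \<Rightarrow> nat) \<Rightarrow> 'n pt \<Rightarrow> real" where
  "mnm \<alpha> x = (\<Prod>i\<in>UNIV. (x $ i) ^ \<alpha> i)"

definition dm :: "('n::finite \<Rightarrow> nat) \<Rightarrow> 'n \<Rightarrow> 'n pt \<Rightarrow> real" where
  "dm \<alpha> j x = of_nat (\<alpha> j) * (x $ j) ^ (\<alpha> j - 1) * (\<Prod>i\<in>UNIV - {j}. (x $ i) ^ \<alpha> i)"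

lemma finite_Pk: "finite {\<alpha>::'n::finite \<Rightarrow> nat. sum \<alpha> UNIV \<le> k}"
proof -
  have "{\<alpha>::'n \<Rightarrow> nat. sum \<alpha> UNIV \<le> k} \<subseteq> PiE UNIV (\<lambda>_. {..k})"
  proof
    fix \<alpha> :: "'n \<Rightarrow> nat" assume "\<alpha> \<in> {\<alpha>. sum \<alpha> UNIV \<le> k}"
    then have "\<alpha> i \<le> k" for i
      using member_le_sum[of i UNIV \<alpha>] by auto
    then show "\<alpha> \<in> PiE UNIV (\<lambda>_. {..k})" by auto
  qed
  moreover have "finite (PiE (UNIV::'n set) (\<lambda>_. {..k}))" by (intro finite_PiE) auto
  ultimately show ?thesis by (rule finite_subset)
qed

lemma mnm_deriv: "(mnm \<alpha> has_derivative (\<lambda>y. (\<chi> j. dm \<alpha> j x) \<bullet> y)) (at x)"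
proof -
  have "((\<lambda>x. \<Prod>i\<in>UNIV. (x $ i) ^ \<alpha> i) has_derivative
     (\<lambda>y. \<Sum>i\<in>UNIV. (of_nat (\<alpha> i) * (y $ i) * (x $ i) ^ (\<alpha> i - 1)) * (\<Prod>j\<in>UNIV - {i}. (x $ j) ^ \<alpha> j))) (at x)"
    by (intro has_derivative_prod has_derivative_power bounded_linear_imp_has_derivative bounded_linear_vec_nth)
  moreover have "(\<lambda>y. \<Sum>i\<in>UNIV. (of_nat (\<alpha> i) * (y $ i) * (x $ i) ^ (\<alpha> i - 1)) * (\<Prod>j\<in>UNIV - {i}. (x $ j) ^ \<alpha> j))
     = (\<lambda>y. (\<chi> j. dm \<alpha> j x) \<bullet> y)"
    by (auto simp: inner_vec_def dm_def intro!: ext sum.cong)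
  ultimately show ?thesis unfolding mnm_def by simp
qed

definition gv :: "(('n::finite \<Rightarrow> nat) \<Rightarrow> real) \<Rightarrow> ('n \<Rightarrow> nat) set \<Rightarrow> 'n pt \<Rightarrow> 'n pt" where
  "gv c P x = (\<chi> j. \<Sum>\<alpha>\<in>P. c \<alpha> * dm \<alpha> j x)"

lemma polysum_deriv:
  assumes "finite P"
  shows "((\<lambda>x. \<Sum>\<alpha>\<in>P. c \<alpha> * mnm \<alpha> x) has_derivative (\<lambda>y. gv c P x \<bullet> y)) (at x)"
proof -
  have "((\<lambda>x. \<Sum>\<alpha>\<in>P. c \<alpha> * mnm \<alpha> x) has_derivative (\<lambda>y. \<Sum>\<alpha>\<in>P. c \<alpha> * ((\<chi> j. dm \<alpha> j x) \<bullet> y))) (at x)"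
    by (intro has_derivative_sum has_derivative_mult_right mnm_deriv)
  moreover have "(\<lambda>y. \<Sum>\<alpha>\<in>P. c \<alpha> * ((\<chi> j. dm \<alpha> j x) \<bullet> y)) = (\<lambda>y. gv c P x \<bullet> y)"
    by (auto simp: gv_def inner_vec_def sum_distrib_left sum_distrib_right intro!: ext sum.cong
      | subst sum.swap)+
  ultimately show ?thesis by simp
qed

lemma grad_eq:
  assumes "(f has_derivative (\<lambda>y. g \<bullet> y)) (at x)"
  shows "grad f x = g"
proof -
  have ex: "\<exists>g. (f has_derivative (\<lambda>h. g \<bullet> h)) (at x)" using assms by blast
  have s: "(f has_derivative (\<lambda>h. grad f x \<bullet> h)) (at x)"
    unfolding grad_def by (rule someI_ex[OF ex])
  have "(\<lambda>h. grad f x \<bullet> h) = (\<lambda>h. g \<bullet> h)" using has_derivative_unique[OF s assms] .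
  then have "grad f x \<bullet> (grad f x - g) = g \<bullet> (grad f x - g)" by metis
  then have "(grad f x - g) \<bullet> (grad f x - g) = 0" by (simp add: inner_diff_left)
  then show ?thesis by simp
qed

lemma poly_degI:
  assumes "\<And>x. p x = (\<Sum>\<alpha>\<in>{\<alpha>. sum \<alpha> UNIV \<le> k}. c \<alpha> * mnm \<alpha> x)"
  shows "poly_deg k p"
  unfolding poly_deg_def by (rule exI[of _ c]) (simp add: assms mnm_def)

lemma poly_repr:
  assumes "poly_deg k p"
  obtains c where "p = (\<lambda>x. \<Sum>\<alpha>\<in>{\<alpha>. sum \<alpha> UNIV \<le> k}. c \<alpha> * mnm \<alpha> x)"
  using assms unfolding poly_deg_def mnm_def by blast

lemma poly_grad:
  assumes "poly_deg k p"
  obtains c where "\<And>x. grad p x = gv c {\<alpha>. sum \<alpha> UNIV \<le> k} x"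
    and "p = (\<lambda>x. \<Sum>\<alpha>\<in>{\<alpha>. sum \<alpha> UNIV \<le> k}. c \<alpha> * mnm \<alpha> x)"
proof -
  obtain c where c: "p = (\<lambda>x. \<Sum>\<alpha>\<in>{\<alpha>. sum \<alpha> UNIV \<le> k}. c \<alpha> * mnm \<alpha> x)"
    using poly_repr[OF assms] by blast
  show ?thesis
    apply (rule that[of c])
    using c grad_eq[OF polysum_deriv[OF finite_Pk]] by auto
qed

lemma poly_deg_add: "poly_deg k f \<Longrightarrow> poly_deg k g \<Longrightarrow> poly_deg k (\<lambda>x. f x + g x)"
proof -
  assume f: "poly_deg k f" and g: "poly_deg k g"
  obtain c where c: "f = (\<lambda>x. \<Sum>\<alpha>\<in>{\<alpha>. sum \<alpha> UNIV \<le> k}. c \<alpha> * mnm \<alpha> x)"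
    using f by (rule poly_repr)
  obtain d where d: "g = (\<lambda>x. \<Sum>\<alpha>\<in>{\<alpha>. sum \<alpha> UNIV \<le> k}. d \<alpha> * mnm \<alpha> x)"
    using g by (rule poly_repr)
  have "f x + g x = (\<Sum>\<alpha>\<in>{\<alpha>. sum \<alpha> UNIV \<le> k}. (c \<alpha> + d \<alpha>) * mnm \<alpha> x)" for x
    unfolding c d sum.distrib[symmetric] by (rule sum.cong) (auto simp: distrib_right)
  then show ?thesis by (rule poly_degI)
qed

lemma poly_deg_cmul: "poly_deg k f \<Longrightarrow> poly_deg k (\<lambda>x. a * f x)"
proof -
  assume "poly_deg k f"
  then obtain c where c: "f = (\<lambda>x. \<Sum>\<alpha>\<in>{\<alpha>. sum \<alpha> UNIV \<le> k}. c \<alpha> * mnm \<alpha> x)"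
    by (rule poly_repr)
  have "a * f x = (\<Sum>\<alpha>\<in>{\<alpha>. sum \<alpha> UNIV \<le> k}. (a * c \<alpha>) * mnm \<alpha> x)" for x
    unfolding c sum_distrib_left by (rule sum.cong) auto
  then show ?thesis by (rule poly_degI)
qed

lemma poly_deg_zero: "poly_deg k (\<lambda>x. 0)"
  unfolding poly_deg_def by (intro exI[of _ "\<lambda>_. 0"]) simp

lemma poly_deg_sum: "finite I \<Longrightarrow> (\<And>i. i \<in> I \<Longrightarrow> poly_deg k (f i)) \<Longrightarrow> poly_deg k (\<lambda>x. \<Sum>i\<in>I. f i x)"
  by (induction I rule: finite_induct) (auto intro: poly_deg_add poly_deg_zero)

lemma poly_deg_mnm: "sum \<beta> UNIV \<le> k \<Longrightarrow> poly_deg k (mnm \<beta>)"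
proof -
  assume b: "sum \<beta> UNIV \<le> k"
  have "mnm \<beta> x = (\<Sum>\<gamma>\<in>{\<alpha>. sum \<alpha> UNIV \<le> k}. (if \<gamma> = \<beta> then 1 else 0) * mnm \<gamma> x)" for x
  proof -
    have "(\<Sum>\<gamma>\<in>{\<alpha>. sum \<alpha> UNIV \<le> k}. (if \<gamma> = \<beta> then 1 else 0) * mnm \<gamma> x)
       = (\<Sum>\<gamma>\<in>{\<alpha>. sum \<alpha> UNIV \<le> k}. (if \<gamma> = \<beta> then mnm \<gamma> x else 0))"
      by (rule sum.cong) auto
    also have "\<dots> = mnm \<beta> x" using b finite_Pk[of k] by (subst sum.delta[OF finite_Pk]) simp
    finally show ?thesis by simp
  qed
  then show ?thesis by (rule poly_degI)
qed

lemma poly_deg_dm: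
  assumes "sum \<alpha> UNIV \<le> k"
  shows "poly_deg k (dm \<alpha> j)"
proof (cases "\<alpha> j = 0")
  case True
  then show ?thesis unfolding dm_def by (simp add: poly_deg_zero)
next
  case False
  let ?\<beta> = "\<alpha>(j := \<alpha> j - 1)"
  have le: "sum ?\<beta> UNIV \<le> k"
    using assms order_trans[OF sum_mono[of UNIV ?\<beta> \<alpha>]] by auto
  have "dm \<alpha> j x = of_nat (\<alpha> j) * mnm ?\<beta> x" for x
  proof -
    have "mnm ?\<beta> x = (x $ j) ^ (\<alpha> j - 1) * (\<Prod>i\<in>UNIV - {j}. (x $ i) ^ ?\<beta> i)"
      unfolding mnm_def by (subst prod.remove[of UNIV j]) (auto simp del: fun_upd_apply, simp)
    also have "(\<Prod>i\<in>UNIV - {j}. (x $ i) ^ ?\<beta> i) = (\<Prod>i\<in>UNIV - {j}. (x $ i) ^ \<alpha> i)"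
      by (rule prod.cong) auto
    finally have e: "mnm ?\<beta> x = (x $ j) ^ (\<alpha> j - 1) * (\<Prod>i\<in>UNIV - {j}. (x $ i) ^ \<alpha> i)" .
    show ?thesis unfolding dm_def e by (simp add: mult.assoc)
  qed
  then have "dm \<alpha> j = (\<lambda>x. of_nat (\<alpha> j) * mnm ?\<beta> x)" by auto
  then show ?thesis using poly_deg_cmul[OF poly_deg_mnm[OF le]] by simp
qed

lemma poly_grad_comp:
  assumes "poly_deg k p"
  shows "poly_deg k (\<lambda>x. grad p x $ j)"
proof -
  obtain c where c: "\<And>x. grad p x = gv c {\<alpha>. sum \<alpha> UNIV \<le> k} x"
    using poly_grad[OF assms] by blast
  show ?thesis unfolding c gv_def
    by (simp, intro poly_deg_sum finite_Pk poly_deg_cmul poly_deg_dm) auto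
qed

lemma poly_cont: "poly_deg k p \<Longrightarrow> continuous_on UNIV p"
proof -
  assume "poly_deg k p"
  then obtain c where c: "p = (\<lambda>x. \<Sum>\<alpha>\<in>{\<alpha>. sum \<alpha> UNIV \<le> k}. c \<alpha> * mnm \<alpha> x)"
    by (rule poly_repr)
  show ?thesis unfolding c mnm_def by (intro continuous_intros)
qed

lemma grad_cont: "poly_deg k p \<Longrightarrow> continuous_on UNIV (grad p)"
proof -
  assume "poly_deg k p"
  then obtain c where c: "\<And>x. grad p x = gv c {\<alpha>. sum \<alpha> UNIV \<le> k} x"
    using poly_grad by blast
  show ?thesis unfolding c[abs_def] gv_def dm_def
    by (intro continuous_intros)
qed

lemma poly_normal_flux:
  assumes "poly_deg k p"
  shows "poly_deg k (\<lambda>x. (M *v grad p x) \<bullet> n)"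
proof -
  have "(\<lambda>x. (M *v grad p x) \<bullet> n) = (\<lambda>x. \<Sum>j\<in>UNIV. \<Sum>i\<in>UNIV. (n $ j * M $ j $ i) * grad p x $ i)"
    by (auto simp: inner_vec_def matrix_vector_mult_def sum_distrib_left sum_distrib_right mult_ac intro!: ext)
  moreover have "poly_deg k (\<lambda>x. \<Sum>j\<in>UNIV. \<Sum>i\<in>UNIV. (n $ j * M $ j $ i) * grad p x $ i)"
    by (intro poly_deg_sum poly_deg_cmul poly_grad_comp[OF assms]) auto
  ultimately show ?thesis by simp
qed

lemma dimD:
  fixes F :: "'n::finite pt set"
  assumes ind: "\<not> affine_dependent F" and cF: "card F = CARD('n)" and a: "a \<in> F"
  shows "dim ((+) (- a) ` F) = CARD('n) - 1"
proof -
  have "of_nat (card F) = aff_dim F + 1" using aff_dim_affine_independent[OF ind] .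
  moreover have "aff_dim F = int (dim ((+) (- a) ` F))"
    by (rule aff_dim_eq_dim[OF hull_inc[OF a]])
  ultimately show ?thesis using cF by simp
qed

lemma perp_in_span:
  fixes F :: "'n::finite pt set"
  assumes "\<forall>b\<in>F. (b - a) \<bullet> n = 0" "w \<in> span ((+) (- a) ` F)"
  shows "w \<bullet> n = 0"
proof -
  have "orthogonal n y" if y: "y \<in> (+) (- a) ` F" for y
  proof -
    obtain b where b: "b \<in> F" "y = - a + b" using y by blast
    have "(b - a) \<bullet> n = 0" using assms(1) b(1) by blast
    then have "n \<bullet> y = 0" using b(2) by (simp add: inner_commute)
    then show ?thesis by (simp add: orthogonal_def)
  qed
  then have "orthogonal n w"
    by (rule orthogonal_to_span[OF assms(2)])
  then show ?thesis by (simp add: orthogonal_def inner_commute)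
qed

lemma normal_pm:
  fixes F :: "'n::finite pt set"
  assumes ind: "\<not> affine_dependent F" and cF: "card F = CARD('n)" and a: "a \<in> F"
    and n: "norm n = 1" "\<forall>b\<in>F. (b - a) \<bullet> n = 0"
    and m: "norm m = 1" "\<forall>b\<in>F. (b - a) \<bullet> m = 0"
  shows "m = n \<or> m = - n"
proof (rule ccontr)
  assume nm: "\<not> (m = n \<or> m = - n)"
  define S where "S = span ((+) (- a) ` F)"
  define Oc where "Oc = {y \<in> UNIV. \<forall>x \<in> S. orthogonal x y}"
  have "dim Oc + dim S = dim (UNIV :: 'n pt set)"
    unfolding Oc_def S_def by (rule dim_subspace_orthogonal_to_vectors) auto
  moreover have "dim S = CARD('n) - 1" unfolding S_def dim_span using dimD[OF ind cF a] .
  moreover have "CARD('n) \<ge> 1" by (simp add: Suc_leI)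
  moreover have "dim (UNIV :: 'n pt set) = CARD('n)" by simp
  ultimately have dO: "dim Oc = 1" by arith
  have nO: "n \<in> Oc" and mO: "m \<in> Oc"
    using perp_in_span[of F a n] perp_in_span[of F a m] n m unfolding Oc_def S_def orthogonal_def by auto
  have n0: "n \<noteq> 0" using n by auto
  have "m \<notin> span {n}"
  proof
    assume "m \<in> span {n}"
    then obtain c where c: "m = c *\<^sub>R n" by (auto simp: span_singleton)
    then have "\<bar>c\<bar> = 1" using n m by simp
    then have "c = 1 \<or> c = -1" by auto
    then show False using c nm by auto
  qed
  moreover have "m \<noteq> n" using nm by auto
  ultimately have "independent {m, n}"
    using n0 by (simp add: independent_insert)
  then have "card {m, n} \<le> dim Oc" using independent_card_le_dim[of "{m,n}" Oc] nO mO by auto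
  then show False using dO \<open>m \<noteq> n\<close> by simp
qed

lemma face_split:
  fixes E :: "'n::finite smplx"
  assumes "is_simplex E" "F \<in> faces_of E"
  obtains p where "E - F = {p}" "E = insert p F" "p \<notin> F" "finite E" "F \<subseteq> E"
    "card F = CARD('n)" "card E = CARD('n) + 1" "\<not> affine_dependent E" "\<not> affine_dependent F"
proof -
  have cE: "card E = CARD('n) + 1" and ind: "\<not> affine_dependent E" using assms(1) unfolding is_simplex_def by auto
  have fE: "finite E"
  proof (rule ccontr)
    assume "infinite E"
    then have "card E = 0" by simp
    then show False using cE by simp
  qed
  have FE: "F \<subseteq> E" and cF: "card F = CARD('n)" using assms(2) unfolding faces_of_def by auto
  have "card (E - F) = 1" using card_Diff_subset[OF finite_subset[OF FE fE] FE] cE cF by simp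
  then obtain p where p: "E - F = {p}" using card_1_singleton_iff[of "E - F"] by auto
  have i1: "E = insert p F" using p FE by blast
  have i2: "p \<notin> F" using p by blast
  have i3: "\<not> affine_dependent F" using affine_independent_subset[OF ind FE] .
  show ?thesis by (rule that[OF p i1 i2 fE FE cF cE ind i3])
qed

lemma nrm_props:
  fixes E :: "'n::finite smplx"
  assumes "is_simplex E" "F \<in> faces_of E"
  shows "norm (nrm E F) = 1 \<and> (\<forall>a\<in>F. \<forall>b\<in>F. (a - b) \<bullet> nrm E F = 0) \<and>
                      (\<forall>a\<in>F. \<forall>p\<in>E - F. (p - a) \<bullet> nrm E F < 0)"
proof -
  obtain p where p: "E - F = {p}" "E = insert p F" "p \<notin> F" "finite E" "F \<subseteq> E"
    "card F = CARD('n)" "card E = CARD('n) + 1" "\<not> affine_dependent E" "\<not> affine_dependent F"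
    by (rule face_split[OF assms])
  have "F \<noteq> {}" using p(6) by (metis card.empty zero_less_card_finite less_irrefl)
  then obtain a where a: "a \<in> F" by auto
  define S where "S = span ((+) (- a) ` F)"
  have "p \<notin> affine hull F"
  proof
    assume "p \<in> affine hull F"
    moreover have "affine hull F \<subseteq> affine hull (E - {p})" using p(3) p(5) by (intro hull_mono) blast
    ultimately have "p \<in> affine hull (E - {p})" by (rule subsetD[rotated])
    then have "affine_dependent E" unfolding affine_dependent_def
      by (rule bexI[of _ p]) (simp add: p(2))
    then show False using p(8) by simp
  qed
  moreover have ah: "affine hull F = (\<lambda>x. a + x) ` S"
    unfolding S_def by (rule affine_hull_span_gen[OF hull_inc[OF a]])
  ultimately have pS: "p - a \<notin> S"
  proof -
    assume np: "p \<notin> affine hull F" and ah: "affine hull F = (\<lambda>x. a + x) ` S"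
    show "p - a \<notin> S"
    proof
      assume "p - a \<in> S"
      then have "a + (p - a) \<in> (\<lambda>x. a + x) ` S" by (rule imageI)
      then show False using np ah by simp
    qed
  qed
  obtain y z where yz: "y \<in> span ((+) (- a) ` F)" "\<And>w. w \<in> span ((+) (- a) ` F) \<Longrightarrow> orthogonal z w" "p - a = y + z"
    by (rule orthogonal_subspace_decomp_exists[of "(+) (- a) ` F" "p - a"]) blast
  note yz = yz[folded S_def]
  have z0: "z \<noteq> 0" using yz pS by auto
  define n where "n = - (1 / norm z) *\<^sub>R z"
  have nn: "norm n = 1" unfolding n_def using z0 by simp
  have diffS: "b - c \<in> S" if "b \<in> F" "c \<in> F" for b c
  proof -
    have "(- a + b) - (- a + c) \<in> S" unfolding S_def
      by (intro span_diff span_base) (use that in auto)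
    then show ?thesis by simp
  qed
  have orth: "\<forall>b\<in>F. \<forall>c\<in>F. (b - c) \<bullet> n = 0"
    using yz(2)[OF diffS] unfolding n_def orthogonal_def by (auto simp: inner_commute)
  have "(p - b) \<bullet> n < 0" if "b \<in> F" for b
  proof -
    have "(p - b) \<bullet> n = (p - a) \<bullet> n - (b - a) \<bullet> n" by (simp add: inner_diff_left)
    also have "(b - a) \<bullet> n = 0" using orth that a by blast
    also have "(p - a) \<bullet> n = y \<bullet> n + z \<bullet> n" using yz(3) by (simp add: inner_add_left)
    also have "y \<bullet> n = 0" using yz(2)[OF yz(1)] unfolding n_def orthogonal_def by (simp add: inner_commute)
    also have "z \<bullet> n = - norm z" unfolding n_def using z0
      by (simp add: power2_norm_eq_inner[symmetric] power2_eq_square)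
    finally show ?thesis using z0 by simp
  qed
  then have ex: "\<exists>n. norm n = 1 \<and> (\<forall>a\<in>F. \<forall>b\<in>F. (a - b) \<bullet> n = 0) \<and>
                      (\<forall>a\<in>F. \<forall>p\<in>E - F. (p - a) \<bullet> n < 0)"
    using nn orth p(1) by (intro exI[of _ n]) auto
  show ?thesis unfolding nrm_def by (rule someI_ex[OF ex])
qed

lemma nrm_perp:
  assumes "is_simplex E" "F \<in> faces_of E" "a \<in> F"
  shows "\<forall>b\<in>F. (b - a) \<bullet> nrm E F = 0"
  using nrm_props[OF assms(1,2)] assms(3) by blast

lemma nrm_shared:
  fixes E :: "'n::finite smplx"
  assumes "is_simplex E" "F \<in> faces_of E" "is_simplex E'" "F \<in> faces_of E'"
  shows "nrm E' F = nrm E F \<or> nrm E' F = - nrm E F"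
proof -
  obtain p where p: "E - F = {p}" "E = insert p F" "p \<notin> F" "finite E" "F \<subseteq> E"
    "card F = CARD('n)" "card E = CARD('n) + 1" "\<not> affine_dependent E" "\<not> affine_dependent F"
    by (rule face_split[OF assms(1,2)])
  have "F \<noteq> {}" using p(6) by (metis card.empty zero_less_card_finite less_irrefl)
  then obtain a where a: "a \<in> F" by auto
  show ?thesis
    apply (rule normal_pm[OF p(9) p(6) a])
    using nrm_props[OF assms(1,2)] nrm_props[OF assms(3,4)] nrm_perp[OF assms(1,2) a] nrm_perp[OF assms(3,4) a]
    by auto
qed

lemma hull_F_perp:
  fixes F :: "'n::finite pt set"
  assumes "a \<in> F" "\<forall>b\<in>F. (b - a) \<bullet> m = 0" "y \<in> convex hull F"
  shows "(y - a) \<bullet> m = 0"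
proof -
  have "y \<in> affine hull F" using assms(3) convex_hull_subset_affine_hull by blast
  then have "y \<in> (\<lambda>x. a + x) ` span ((+) (- a) ` F)"
    using affine_hull_span_gen[OF hull_inc[OF assms(1)]] by simp
  then obtain w where w: "w \<in> span ((+) (- a) ` F)" "y = a + w" by blast
  show ?thesis using perp_in_span[OF assms(2) w(1)] w(2) by simp
qed

lemma same_side_conflict:
  fixes E :: "'n::finite smplx"
  assumes cm: "conforming_mesh T \<Omega>" and ET: "E \<in> T" "E' \<in> T" and ne: "E \<noteq> E'"
    and FE: "F \<in> faces_of E" and FE': "F \<in> faces_of E'" and eq: "nrm E F = nrm E' F"
  shows False
proof -
  have sE: "is_simplex E" and sE': "is_simplex E'" using cm ET unfolding conforming_mesh_def by auto
  have conf: "convex hull E \<inter> convex hull E' = convex hull (E \<inter> E')"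
    using cm ET ne unfolding conforming_mesh_def by auto
  obtain p where p: "E - F = {p}" "E = insert p F" "p \<notin> F" "finite E" "F \<subseteq> E"
    "card F = CARD('n)" "card E = CARD('n) + 1" "\<not> affine_dependent E" "\<not> affine_dependent F"
    by (rule face_split[OF sE FE])
  obtain p' where p': "E' - F = {p'}" "E' = insert p' F" "p' \<notin> F" "finite E'" "F \<subseteq> E'"
    "card F = CARD('n)" "card E' = CARD('n) + 1" "\<not> affine_dependent E'" "\<not> affine_dependent F"
    by (rule face_split[OF sE' FE'])
  have fF: "finite F" using p(4,5) finite_subset by blast
  have "F \<noteq> {}" using p(6) by (metis card.empty zero_less_card_finite less_irrefl)
  then obtain a where a: "a \<in> F" by auto
  define m where "m = nrm E F"
  have perp: "\<forall>b\<in>F. (b - a) \<bullet> m = 0" unfolding m_def by (rule nrm_perp[OF sE FE a])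
  have neg: "(p - a) \<bullet> m < 0" using nrm_props[OF sE FE] a p(1) unfolding m_def by auto
  have neg': "(p' - a) \<bullet> m < 0" using nrm_props[OF sE' FE'] a p'(1) unfolding m_def eq by auto
  have pE': "p \<notin> E'"
  proof
    assume "p \<in> E'"
    then have "E \<subseteq> E'" using p(2) p'(5) by blast
    then have "E = E'" using card_subset_eq[OF p'(4)] p(7) p'(7) by simp
    then show False using ne by simp
  qed
  have int: "E \<inter> E' = F" using p(2) pE' p'(5) by blast
  have "aff_dim E = int CARD('n)" using aff_dim_affine_independent[OF p(8)] p(7) by simp
  then have "affine hull E = UNIV" using aff_dim_eq_full[of E] by simp
  then have "p' \<in> affine hull E" by simp
  then obtain u where u: "sum u E = 1" "(\<Sum>v\<in>E. u v *\<^sub>R v) = p'"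
    unfolding affine_hull_finite[OF p(4)] by blast
  have uF: "sum u F = 1 - u p" using u(1) p(2,3) fF by simp
  have p'dec: "p' = u p *\<^sub>R p + (\<Sum>v\<in>F. u v *\<^sub>R v)" using u(2) p(2,3) fF by simp
  have "(p' - a) \<bullet> m = u p * ((p - a) \<bullet> m)"
  proof -
    have aa: "u p *\<^sub>R a + sum u F *\<^sub>R a = a"
    proof -
      have "u p *\<^sub>R a + sum u F *\<^sub>R a = (u p + sum u F) *\<^sub>R a" by (simp add: scaleR_add_left)
      then show ?thesis using uF by simp
    qed
    have "u p *\<^sub>R (p - a) + (\<Sum>v\<in>F. u v *\<^sub>R (v - a))
        = (u p *\<^sub>R p + (\<Sum>v\<in>F. u v *\<^sub>R v)) - (u p *\<^sub>R a + sum u F *\<^sub>R a)"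
      by (simp add: scaleR_diff_right sum_subtractf scaleR_sum_left algebra_simps)
    also have "\<dots> = p' - a" unfolding aa p'dec[symmetric] by (rule refl)
    finally have "p' - a = u p *\<^sub>R (p - a) + (\<Sum>v\<in>F. u v *\<^sub>R (v - a))" by simp
    moreover have "(\<Sum>v\<in>F. u v *\<^sub>R (v - a)) \<bullet> m = 0"
      using perp by (simp add: inner_sum_left)
    ultimately show ?thesis by (simp add: inner_add_left)
  qed
  then have up: "u p > 0" using neg neg' by (simp add: mult_less_0_iff)
  define d where "d = real CARD('n)"
  have d0: "d > 0" unfolding d_def by simp
  define U where "U = (\<Sum>v\<in>F. \<bar>u v\<bar>)"
  have U0: "U \<ge> 0" unfolding U_def by (simp add: sum_nonneg)
  define s where "s = 1 / (1 + d * U)"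
  have s0: "s > 0" unfolding s_def using d0 U0 by (simp add: add_pos_nonneg)
  have s1: "s \<le> 1" unfolding s_def using d0 U0 by (simp add: divide_le_eq)
  have sdU: "(1 - s) / d = s * U"
  proof -
    have pos: "1 + d * U > 0" using d0 U0 by (simp add: add_pos_nonneg)
    have e: "s * (1 + d * U) = 1" unfolding s_def using pos by simp
    then have "s + s * (d * U) = 1" by (simp add: distrib_left)
    then have "1 - s = s * (d * U)" by linarith
    then have "(1 - s) / d = s * (d * U) / d" by simp
    also have "\<dots> = s * U" using d0 by simp
    finally show ?thesis .
  qed
  define c where "c = (\<Sum>v\<in>F. (1 / d) *\<^sub>R v)"
  define w where "w = (\<lambda>v. if v = p then s * u p else (1 - s) / d + s * u v)"
  define x where "x = (1 - s) *\<^sub>R c + s *\<^sub>R p'"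
  have cardF: "card F = d" unfolding d_def using p(6) by simp
  have w0: "\<forall>v\<in>E. 0 \<le> w v"
  proof
    fix v assume "v \<in> E"
    show "0 \<le> w v"
    proof (cases "v = p")
      case True then show ?thesis unfolding w_def using s0 up by simp
    next
      case False
      then have vF: "v \<in> F" using \<open>v \<in> E\<close> p(2) by blast
      have "\<bar>u v\<bar> \<le> U" unfolding U_def using member_le_sum[of v F "\<lambda>v. \<bar>u v\<bar>"] vF fF by simp
      then have "- U \<le> u v" by linarith
      then have "s * (- U) \<le> s * u v" using s0 by (intro mult_left_mono) auto
      moreover have "w v = (1 - s) / d + s * u v" unfolding w_def using False by simp
      ultimately show ?thesis using sdU by simp
    qed
  qed
  have wF: "w v = (1 - s) / d + s * u v" if "v \<in> F" for v
    using that p(3) unfolding w_def by auto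
  have wsum: "sum w E = 1"
  proof -
    have "sum w E = w p + sum w F" unfolding p(2) using fF p(3) by (rule sum.insert)
    also have "w p = s * u p" unfolding w_def by simp
    also have "sum w F = (\<Sum>v\<in>F. (1 - s) / d + s * u v)" by (rule sum.cong[OF refl wF])
    also have "\<dots> = card F * ((1 - s) / d) + s * sum u F" by (simp add: sum.distrib sum_distrib_left)
    also have "card F * ((1 - s) / d) = 1 - s" using cardF d0 by simp
    finally show ?thesis using uF by (simp add: algebra_simps)
  qed
  have wx: "(\<Sum>v\<in>E. w v *\<^sub>R v) = x"
  proof -
    have "(\<Sum>v\<in>E. w v *\<^sub>R v) = w p *\<^sub>R p + (\<Sum>v\<in>F. w v *\<^sub>R v)"
      unfolding p(2) using fF p(3) by (rule sum.insert)
    also have "w p = s * u p" unfolding w_def by simp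
    also have "(\<Sum>v\<in>F. w v *\<^sub>R v) = (\<Sum>v\<in>F. ((1 - s) / d + s * u v) *\<^sub>R v)"
      by (rule sum.cong[OF refl]) (simp add: wF)
    also have "\<dots> = (1 - s) *\<^sub>R c + s *\<^sub>R (\<Sum>v\<in>F. u v *\<^sub>R v)"
      unfolding c_def by (simp add: scaleR_add_left sum.distrib scaleR_sum_right)
    finally show ?thesis unfolding x_def p'dec by (simp add: algebra_simps)
  qed
  have xE: "x \<in> convex hull E"
    unfolding convex_hull_finite[OF p(4)] using w0 wsum wx by (intro CollectI exI[of _ w]) simp
  have cF: "c \<in> convex hull F"
  proof -
    have "\<forall>v\<in>F. 0 \<le> (\<lambda>v. 1 / d) v" using d0 by simp
    moreover have "sum (\<lambda>v. 1 / d) F = 1" using cardF d0 by simp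
    ultimately show ?thesis unfolding convex_hull_finite[OF fF] c_def by (intro CollectI exI[of _ "\<lambda>v. 1 / d"]) simp
  qed
  have "convex hull F \<subseteq> convex hull E'" using p'(5) by (rule hull_mono)
  then have cE': "c \<in> convex hull E'" using cF by blast
  have p'E': "p' \<in> convex hull E'" using p'(2) by (simp add: hull_inc)
  have xE': "x \<in> convex hull E'"
    unfolding x_def by (rule convexD[OF convex_convex_hull cE' p'E']) (use s0 s1 in auto)
  have "x \<in> convex hull F" using xE xE' conf int by blast
  then have "(x - a) \<bullet> m = 0" by (rule hull_F_perp[OF a perp])
  moreover have "(c - a) \<bullet> m = 0" using cF by (rule hull_F_perp[OF a perp])
  moreover have "x - a = (1 - s) *\<^sub>R (c - a) + s *\<^sub>R (p' - a)" unfolding x_def by (simp add: algebra_simps)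
  ultimately have "s * ((p' - a) \<bullet> m) = 0" by (simp add: inner_add_left)
  then show False using s0 neg' by simp
qed

lemma card_adj_le2:
  fixes T :: "'n::finite smplx set"
  assumes cm: "conforming_mesh T \<Omega>" and F: "F \<in> mesh_faces T"
  shows "card (adj T F) \<le> 2"
proof (rule ccontr)
  assume "\<not> card (adj T F) \<le> 2"
  then have c3: "card (adj T F) \<ge> 3" by simp
  have fT: "finite T" using cm unfolding conforming_mesh_def by auto
  have fA: "finite (adj T F)" unfolding adj_def using fT by simp
  have cardF: "card F = CARD('n)" using F unfolding mesh_faces_def faces_of_def by auto
  have faces: "F \<in> faces_of E" "E \<in> T" "is_simplex E" if "E \<in> adj T F" for E
    using that cardF cm unfolding adj_def faces_of_def conforming_mesh_def by auto
  obtain E1 where E1: "E1 \<in> adj T F" using c3 by (metis card.empty ex_in_conv not_numeral_le_zero)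
  have "card (adj T F - {E1}) \<ge> 2" using c3 E1 fA by simp
  then obtain E2 where E2: "E2 \<in> adj T F - {E1}" by (metis card.empty ex_in_conv not_numeral_le_zero)
  have "card (adj T F - {E1} - {E2}) \<ge> 1" using c3 E1 E2 fA by (simp add: card_Diff_singleton_if)
  then obtain E3 where E3: "E3 \<in> adj T F - {E1} - {E2}" by (metis card.empty ex_in_conv not_one_le_zero)
  have n2: "nrm E2 F = nrm E1 F \<or> nrm E2 F = - nrm E1 F"
    using nrm_shared[OF faces(3,1)[OF E1] faces(3,1)[of E2]] E2 by auto
  have n3: "nrm E3 F = nrm E1 F \<or> nrm E3 F = - nrm E1 F"
    using nrm_shared[OF faces(3,1)[OF E1] faces(3,1)[of E3]] E3 by auto
  show False
  proof (cases "nrm E2 F = nrm E1 F")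
    case True
    then show ?thesis using same_side_conflict[OF cm faces(2)[OF E1] faces(2)[of E2] _ faces(1)[OF E1] faces(1)[of E2]] E2 by auto
  next
    case False
    show ?thesis
    proof (cases "nrm E3 F = nrm E1 F")
      case True
      then show ?thesis using same_side_conflict[OF cm faces(2)[OF E1] faces(2)[of E3] _ faces(1)[OF E1] faces(1)[of E3]] E3 by auto
    next
      case False2: False
      then have "nrm E2 F = nrm E3 F" using n2 n3 False by auto
      then show ?thesis using same_side_conflict[OF cm faces(2)[of E2] faces(2)[of E3] _ faces(1)[of E2] faces(1)[of E3]] E2 E3 by auto
    qed
  qed
qed

lemma hE_pos:
  fixes E :: "'n::finite smplx"
  assumes "is_simplex E"
  shows "hE E > 0"
proof -
  have cE: "card E = CARD('n) + 1" using assms unfolding is_simplex_def by auto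
  then have fE: "finite E" by (metis card.infinite add_is_0 one_neq_zero)
  have "card E \<ge> 2" using cE by (simp add: Suc_leI)
  then obtain x y where xy: "x \<in> E" "y \<in> E" "x \<noteq> y"
    by (metis One_nat_def card_le_Suc_iff numeral_2_eq_2 insert_iff)
  have b: "bounded (convex hull E)" using fE by (simp add: compact_imp_bounded finite_imp_compact_convex_hull)
  have "dist x y \<le> diameter (convex hull E)"
    by (rule diameter_bounded_bound[OF b hull_inc[OF xy(1)] hull_inc[OF xy(2)]])
  moreover have "dist x y > 0" using xy(3) by simp
  ultimately show ?thesis unfolding hE_def by linarith
qed

lemma cont_integrable_compact:
  fixes f :: "'a::euclidean_space \<Rightarrow> real"
  assumes "compact S" "continuous_on S f"
  shows "f integrable_on S"
proof -
  have m: "S \<in> lmeasurable" using assms(1) by (rule lmeasurable_compact)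
  obtain B where B: "\<And>x. x \<in> S \<Longrightarrow> norm (f x) \<le> B"
    using compact_imp_bounded[OF compact_continuous_image[OF assms(2) assms(1)]]
    unfolding bounded_iff by auto
  have "f absolutely_integrable_on S"
    apply (rule measurable_bounded_by_integrable_imp_absolutely_integrable[where g="\<lambda>_. B"])
    using continuous_imp_measurable_on_sets_lebesgue[OF assms(2)] m B
    by (auto intro: integrable_on_const)
  then show ?thesis using absolutely_integrable_on_def by blast
qed

definition prism :: "'n::finite pt set \<Rightarrow> 'n pt \<Rightarrow> 'n pt set" where
  "prism F n = {y + t *\<^sub>R n | y t. y \<in> convex hull F \<and> t \<in> {0..1}}"

definition projF :: "'n::finite pt set \<Rightarrow> 'n pt \<Rightarrow> 'n pt \<Rightarrow> 'n pt" where
  "projF F n x = x - ((x - (SOME a. a \<in> F)) \<bullet> n) *\<^sub>R n"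

lemma face_int_alt: "face_int F n f = integral (prism F n) (\<lambda>x. f (projF F n x))"
  unfolding face_int_def prism_def projF_def Let_def by simp

lemma compact_prism:
  assumes "finite F"
  shows "compact (prism F n)"
proof -
  have eq: "prism F n = (\<lambda>z. fst z + snd z *\<^sub>R n) ` ((convex hull F) \<times> {0..1})"
  proof (intro set_eqI iffI)
    fix x assume "x \<in> prism F n"
    then obtain y t where "x = y + t *\<^sub>R n" "y \<in> convex hull F" "t \<in> {0..1::real}"
      unfolding prism_def by blast
    then show "x \<in> (\<lambda>z. fst z + snd z *\<^sub>R n) ` ((convex hull F) \<times> {0..1})"
      by (intro image_eqI[of _ _ "(y, t)"]) (simp_all add: mem_Times_iff)
  next
    fix x assume "x \<in> (\<lambda>z. fst z + snd z *\<^sub>R n) ` ((convex hull F) \<times> {0..1})"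
    then obtain y t where "x = y + t *\<^sub>R n" "y \<in> convex hull F" "t \<in> {0..1::real}" by auto
    then show "x \<in> prism F n" unfolding prism_def by blast
  qed
  have cpt: "compact ((convex hull F) \<times> {0..(1::real)})"
    using assms by (intro compact_Times finite_imp_compact_convex_hull) auto
  have cont: "continuous_on ((convex hull F) \<times> {0..(1::real)}) (\<lambda>z. fst z + snd z *\<^sub>R n)"
    by (intro continuous_intros)
  show ?thesis unfolding eq by (rule compact_continuous_image[OF cont cpt])
qed

lemma cont_projF: "continuous_on UNIV (projF F n)"
  unfolding projF_def by (intro continuous_intros)

lemma fi_integrable:
  fixes f :: "'n::finite pt \<Rightarrow> real"
  assumes "finite F" "continuous_on UNIV f"
  shows "(\<lambda>x. f (projF F n x)) integrable_on prism F n"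
proof (rule cont_integrable_compact[OF compact_prism[OF assms(1)]])
  show "continuous_on (prism F n) (\<lambda>x. f (projF F n x))"
    by (rule continuous_on_subset[OF continuous_on_compose2[OF assms(2) cont_projF]]) auto
qed

lemma fi_le:
  fixes F :: "'n::finite pt set"
  assumes "finite F" "continuous_on UNIV f" "continuous_on UNIV g" "\<And>x. f x \<le> g x"
  shows "face_int F n f \<le> face_int F n g"
  unfolding face_int_alt
  by (rule integral_le[OF fi_integrable[OF assms(1,2)] fi_integrable[OF assms(1,3)]]) (simp add: assms(4))

lemma fi_nonneg:
  fixes F :: "'n::finite pt set"
  assumes "finite F" "continuous_on UNIV f" "\<And>x. 0 \<le> f x"
  shows "0 \<le> face_int F n f"
  unfolding face_int_alt
  by (rule integral_nonneg[OF fi_integrable[OF assms(1,2)]]) (simp add: assms(3))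

lemma fi_add:
  fixes F :: "'n::finite pt set"
  assumes "finite F" "continuous_on UNIV f" "continuous_on UNIV g"
  shows "face_int F n (\<lambda>x. f x + g x) = face_int F n f + face_int F n g"
  unfolding face_int_alt
  by (rule integral_add[OF fi_integrable[OF assms(1,2)] fi_integrable[OF assms(1,3)]])

lemma fi_cmul: "face_int F n (\<lambda>x. c * f x) = c * face_int F n f"
  unfolding face_int_alt using integral_cmul[of "prism F n" c "\<lambda>x. f (projF F n x)"] by simp

lemma fi_sum:
  fixes F :: "'n::finite pt set"
  assumes "finite F" "finite I" "\<And>i. i \<in> I \<Longrightarrow> continuous_on UNIV (f i)"
  shows "face_int F n (\<lambda>x. \<Sum>i\<in>I. f i x) = (\<Sum>i\<in>I. face_int F n (f i))"
  unfolding face_int_alt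
  by (rule integral_sum[OF assms(2)]) (rule fi_integrable[OF assms(1) assms(3)])

lemma projF_neg: "projF F (- n) = projF F n"
  unfolding projF_def by (auto intro!: ext)

lemma projF_shift: "projF F n (x + n) = projF F n x" if "norm n = 1" for x
proof -
  have "n \<bullet> n = 1" using that by (simp add: power2_norm_eq_inner[symmetric])
  then show ?thesis unfolding projF_def by (simp add: algebra_simps inner_add_left)
qed

lemma prism_neg: "prism F (- n) = (\<lambda>x. x - n) ` prism F n"
proof -
  have "prism F (- n) = {y + t *\<^sub>R n - n | y t. y \<in> convex hull F \<and> t \<in> {0..1}}"
    unfolding prism_def
  proof (intro set_eqI iffI)
    fix x assume "x \<in> {y + t *\<^sub>R - n |y t. y \<in> convex hull F \<and> t \<in> {0..1}}"
    then obtain y t where "x = y + t *\<^sub>R - n" "y \<in> convex hull F" "t \<in> {0..1::real}" by blast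
    then show "x \<in> {y + t *\<^sub>R n - n |y t. y \<in> convex hull F \<and> t \<in> {0..1}}"
      by (intro CollectI exI[of _ y] exI[of _ "1 - t"]) (auto simp: algebra_simps)
  next
    fix x assume "x \<in> {y + t *\<^sub>R n - n |y t. y \<in> convex hull F \<and> t \<in> {0..1}}"
    then obtain y t where "x = y + t *\<^sub>R n - n" "y \<in> convex hull F" "t \<in> {0..1::real}" by blast
    then show "x \<in> {y + t *\<^sub>R - n |y t. y \<in> convex hull F \<and> t \<in> {0..1}}"
      by (intro CollectI exI[of _ y] exI[of _ "1 - t"]) (auto simp: algebra_simps)
  qed
  also have "\<dots> = (\<lambda>x. x - n) ` prism F n" unfolding prism_def by blast
  finally show ?thesis .
qed

lemma fi_neg:
  assumes "finite F" "norm n = 1"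
  shows "face_int F (- n) f = face_int F n f"
proof -
  define g where "g = (\<lambda>x. f (projF F n x))"
  define S where "S = prism F n"
  define h where "h = (\<lambda>y. if y \<in> S then g y else 0)"
  have gs: "g (x + n) = g x" for x unfolding g_def using projF_shift[OF assms(2)] by simp
  have "bounded S" unfolding S_def using compact_prism[OF assms(1)] by (rule compact_imp_bounded)
  then obtain b where b: "S \<subseteq> cbox (-b) b" by (rule bounded_subset_cbox_symmetric)
  have b': "(\<lambda>x. x - n) ` S \<subseteq> cbox (-b - n) (b - n)"
    using b by (auto simp: mem_box inner_diff_left)
  have "face_int F (- n) f = integral ((\<lambda>x. x - n) ` S) g"
    unfolding face_int_alt projF_neg prism_neg S_def g_def ..
  also have "\<dots> = integral (cbox (-b - n) (b - n) \<inter> (\<lambda>x. x - n) ` S) g" using b' by (simp add: Int_absorb1)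
  also have "\<dots> = integral (cbox (-b - n) (b - n)) (\<lambda>x. if x \<in> (\<lambda>x. x - n) ` S then g x else 0)"
    by (simp add: integral_restrict_Int Int_commute)
  also have "\<dots> = integral (cbox (-b - n) (b - n)) (\<lambda>x. h (x + n))"
  proof (rule integral_cong)
    fix x
    have "x \<in> (\<lambda>x. x - n) ` S \<longleftrightarrow> x + n \<in> S"
      by (auto intro: image_eqI[of _ _ "x + n"])
    then show "(if x \<in> (\<lambda>x. x - n) ` S then g x else 0) = h (x + n)"
      unfolding h_def using gs by simp
  qed
  also have "\<dots> = integral (cbox (-b) b) h"
    by (rule integral_shift_cbox)
  also have "\<dots> = integral (cbox (-b) b \<inter> S) g"
    unfolding h_def by (simp add: integral_restrict_Int Int_commute)
  also have "\<dots> = integral S g" using b by (simp add: Int_absorb1)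
  also have "\<dots> = face_int F n f" unfolding face_int_alt S_def g_def ..
  finally show ?thesis .
qed

lemma ei_integrable:
  fixes f :: "'n::finite pt \<Rightarrow> real"
  assumes "finite E" "continuous_on UNIV f"
  shows "f integrable_on convex hull E"
  by (rule cont_integrable_compact[OF finite_imp_compact_convex_hull[OF assms(1)]])
     (rule continuous_on_subset[OF assms(2)], simp)

lemma ei_le:
  fixes F :: "'n::finite pt set"
  assumes "finite E" "continuous_on UNIV f" "continuous_on UNIV g" "\<And>x. f x \<le> g x"
  shows "elem_int E f \<le> elem_int E g"
  unfolding elem_int_def
  by (rule integral_le[OF ei_integrable[OF assms(1,2)] ei_integrable[OF assms(1,3)]]) (simp add: assms(4))

lemma ei_nonneg:
  fixes F :: "'n::finite pt set"
  assumes "finite E" "continuous_on UNIV f" "\<And>x. 0 \<le> f x"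
  shows "0 \<le> elem_int E f"
  unfolding elem_int_def
  by (rule integral_nonneg[OF ei_integrable[OF assms(1,2)]]) (simp add: assms(3))

lemma ei_cmul: "elem_int E (\<lambda>x. c * f x) = c * elem_int E f"
  unfolding elem_int_def using integral_cmul[of "convex hull E" c f] by simp

lemma cont_mv: "continuous_on S f \<Longrightarrow> continuous_on S (\<lambda>x. (M :: real^'n::finite^'m::finite) *v f x)"
  by (rule continuous_on_compose2[OF linear_continuous_on[OF matrix_vector_mul_linear[THEN linear_conv_bounded_linear[THEN iffD1]]]]) auto

lemma sym_inner:
  assumes "transpose M = (M :: real^'n::finite^'n)"
  shows "x \<bullet> (M *v y) = (M *v x) \<bullet> y"
proof -
  have "x v* transpose M = M *v x" by (rule vector_transpose_matrix)
  then have "x v* M = M *v x" using assms by simp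
  then show ?thesis using dot_lmul_matrix[of x M y] by simp
qed

lemma quad_disc:
  fixes A B C :: real
  assumes "A > 0" "\<And>t. t\<^sup>2 * A + 2 * t * B + C \<ge> 0"
  shows "B\<^sup>2 \<le> A * C"
proof -
  have "(- B / A)\<^sup>2 * A + 2 * (- B / A) * B + C \<ge> 0" by (rule assms(2))
  moreover have "(- B / A)\<^sup>2 * A + 2 * (- B / A) * B + C = C - B\<^sup>2 / A"
    using assms(1) by (simp add: power2_eq_square field_simps)
  ultimately have "B\<^sup>2 / A \<le> C" by simp
  then show ?thesis using assms(1) by (simp add: divide_le_eq mult.commute)
qed

lemma kcs:
  assumes sym: "transpose M = (M :: real^'n::finite^'n)"
    and pd: "\<And>\<xi>. kmin * (norm \<xi>)\<^sup>2 \<le> \<xi> \<bullet> (M *v \<xi>)" and km: "kmin > 0" and n: "norm n = 1"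
  shows "((M *v g) \<bullet> n)\<^sup>2 \<le> (n \<bullet> (M *v n)) * (g \<bullet> (M *v g))"
proof (rule quad_disc)
  show "n \<bullet> (M *v n) > 0" using pd[of n] km n by simp
  fix t :: real
  have "0 \<le> kmin * (norm (t *\<^sub>R n + g))\<^sup>2" using km by simp
  also have "\<dots> \<le> (t *\<^sub>R n + g) \<bullet> (M *v (t *\<^sub>R n + g))" by (rule pd)
  also have "\<dots> = t\<^sup>2 * (n \<bullet> (M *v n)) + t * (n \<bullet> (M *v g)) + t * (g \<bullet> (M *v n)) + g \<bullet> (M *v g)"
    by (simp add: matrix_vector_right_distrib matrix_vector_mult_scaleR inner_add_left inner_add_right power2_eq_square algebra_simps)
  also have "n \<bullet> (M *v g) = (M *v g) \<bullet> n" by (simp add: inner_commute)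
  also have "g \<bullet> (M *v n) = (M *v g) \<bullet> n" by (rule sym_inner[OF sym])
  finally show "t\<^sup>2 * (n \<bullet> (M *v n)) + 2 * t * ((M *v g) \<bullet> n) + g \<bullet> (M *v g) \<ge> 0" by simp
qed

lemma young2:
  fixes q j m :: real
  assumes q: "q > 0"
  shows "2 * \<bar>j * m\<bar> \<le> q * j\<^sup>2 + m\<^sup>2 / q"
proof -
  have "0 \<le> (q * \<bar>j\<bar> - \<bar>m\<bar>)\<^sup>2" by simp
  also have "\<dots> = q\<^sup>2 * j\<^sup>2 - 2 * q * \<bar>j * m\<bar> + m\<^sup>2"
    by (simp add: power2_eq_square abs_mult algebra_simps)
  finally have h: "2 * q * \<bar>j * m\<bar> \<le> q\<^sup>2 * j\<^sup>2 + m\<^sup>2" by simp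
  have "q * (2 * \<bar>j * m\<bar>) \<le> q * (q * j\<^sup>2 + m\<^sup>2 / q)"
    using h q by (simp add: power2_eq_square algebra_simps)
  then show ?thesis using q by (simp add: mult_le_cancel_left_pos)
qed

lemma young_e:
  fixes e q j m :: real
  assumes q: "q > 0" and e: "0 \<le> e" "e \<le> 2"
  shows "e * (j * m) \<le> q * j\<^sup>2 + m\<^sup>2 / q"
proof -
  have "e * (j * m) \<le> e * \<bar>j * m\<bar>" using e by (simp add: mult_left_mono)
  also have "\<dots> \<le> 2 * \<bar>j * m\<bar>" using e by (simp add: mult_right_mono)
  also have "\<dots> \<le> q * j\<^sup>2 + m\<^sup>2 / q" by (rule young2[OF q])
  finally show ?thesis .
qed

lemma bnd_ineq:
  fixes \<tau> \<epsilon> \<theta> M v a :: real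
  assumes t: "\<tau> > 0" and eps: "\<epsilon> \<in> {-1, 0, 1}" and th: "0 \<le> \<theta>" "\<theta> < 1" and M: "1 / (1 - \<theta>) \<le> M"
  shows "\<theta> * (\<tau> * v\<^sup>2) - M * (a\<^sup>2 / \<tau>) \<le> - (1 + \<epsilon>) * (v * a) + \<tau> * v\<^sup>2"
proof -
  have q: "(1 - \<theta>) * \<tau> > 0" using t th by simp
  have e: "0 \<le> 1 + \<epsilon>" "1 + \<epsilon> \<le> 2" using eps by auto
  have y: "(1 + \<epsilon>) * (v * a) \<le> (1 - \<theta>) * \<tau> * v\<^sup>2 + a\<^sup>2 / ((1 - \<theta>) * \<tau>)"
    by (rule young_e[OF q e])
  have "a\<^sup>2 / ((1 - \<theta>) * \<tau>) = (1 / (1 - \<theta>)) * (a\<^sup>2 / \<tau>)" by simp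
  also have "\<dots> \<le> M * (a\<^sup>2 / \<tau>)" using M t by (intro mult_right_mono) auto
  finally have "a\<^sup>2 / ((1 - \<theta>) * \<tau>) \<le> M * (a\<^sup>2 / \<tau>)" .
  then show ?thesis using y by (simp add: algebra_simps)
qed

lemma int_ineq:
  fixes t1 t2 \<epsilon> \<theta> M j a1 a2 \<sigma> :: real
  assumes t1: "t1 > 0" and t2: "t2 > 0" and eps: "\<epsilon> \<in> {-1, 0, 1}" and sg: "\<sigma>\<^sup>2 = 1"
    and th: "0 \<le> \<theta>" "\<theta> < 1" and M: "1 / (1 - \<theta>) + 1 \<le> M"
  shows "\<theta> * ((t1 * t2 / (t1 + t2)) * j\<^sup>2) - M * (a1\<^sup>2 / t1 + a2\<^sup>2 / t2)
     \<le> - (1 + \<epsilon>) * (j * ((t2 * a1 + t1 * \<sigma> * a2) / (t1 + t2))) + (t1 * t2 / (t1 + t2)) * j\<^sup>2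
        - \<epsilon> * ((a1 + a2)\<^sup>2 / (t1 + t2))"
proof -
  define S where "S = t1 + t2"
  define r where "r = t1 * t2 / S"
  define A where "A = a1\<^sup>2 / t1 + a2\<^sup>2 / t2"
  define m where "m = (t2 * a1 + t1 * \<sigma> * a2) / S"
  have S: "S > 0" unfolding S_def using t1 t2 by simp
  have r: "r > 0" unfolding r_def using t1 t2 S by simp
  have A0: "A \<ge> 0" unfolding A_def using t1 t2 by simp
  have q: "(1 - \<theta>) * r > 0" using r th by simp
  have e: "0 \<le> 1 + \<epsilon>" "1 + \<epsilon> \<le> 2" using eps by auto
  have y: "(1 + \<epsilon>) * (j * m) \<le> (1 - \<theta>) * r * j\<^sup>2 + m\<^sup>2 / ((1 - \<theta>) * r)"
    by (rule young_e[OF q e])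
  have cs1: "(t2 * a1 + t1 * \<sigma> * a2)\<^sup>2 \<le> S * (t2 * a1\<^sup>2 + t1 * a2\<^sup>2)"
  proof -
    have "S * (t2 * a1\<^sup>2 + t1 * a2\<^sup>2) - (t2 * a1 + t1 * \<sigma> * a2)\<^sup>2 = t1 * t2 * (a1 - \<sigma> * a2)\<^sup>2"
    proof -
      have "\<sigma> = 1 \<or> \<sigma> = -1" using sg by (simp add: power2_eq_1_iff)
      then show ?thesis unfolding S_def by (elim disjE) (simp_all add: power2_eq_square algebra_simps)
    qed
    moreover have "t1 * t2 * (a1 - \<sigma> * a2)\<^sup>2 \<ge> 0" using t1 t2 by simp
    ultimately show ?thesis by linarith
  qed
  have mA: "m\<^sup>2 / r \<le> A"
  proof -
    have "m\<^sup>2 / r = (t2 * a1 + t1 * \<sigma> * a2)\<^sup>2 / (S * (t1 * t2))"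
      unfolding m_def r_def using S t1 t2 by (simp add: power2_eq_square field_simps)
    also have "\<dots> \<le> S * (t2 * a1\<^sup>2 + t1 * a2\<^sup>2) / (S * (t1 * t2))"
      using cs1 S t1 t2 by (intro divide_right_mono) auto
    also have "\<dots> = A" unfolding A_def using S t1 t2 by (simp add: field_simps power2_eq_square)
    finally show ?thesis .
  qed
  have m2: "m\<^sup>2 / ((1 - \<theta>) * r) \<le> (1 / (1 - \<theta>)) * A"
  proof -
    have "m\<^sup>2 / ((1 - \<theta>) * r) = (1 / (1 - \<theta>)) * (m\<^sup>2 / r)" by simp
    also have "\<dots> \<le> (1 / (1 - \<theta>)) * A" using mA th by (intro mult_left_mono) auto
    finally show ?thesis .
  qed
  have X: "(a1 + a2)\<^sup>2 / S \<le> A"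
  proof -
    have "S * A - (a1 + a2)\<^sup>2 = (t2 * a1 - t1 * a2)\<^sup>2 / (t1 * t2)"
      unfolding S_def A_def using t1 t2 by (simp add: field_simps power2_eq_square)
    moreover have "(t2 * a1 - t1 * a2)\<^sup>2 / (t1 * t2) \<ge> 0" using t1 t2 by simp
    ultimately have "(a1 + a2)\<^sup>2 \<le> S * A" by linarith
    then show ?thesis using S by (simp add: divide_le_eq mult.commute)
  qed
  have X0: "(a1 + a2)\<^sup>2 / S \<ge> 0" using S by simp
  have epsX: "- \<epsilon> * ((a1 + a2)\<^sup>2 / S) \<ge> - ((a1 + a2)\<^sup>2 / S)"
    using eps X0 by auto
  have MA: "(1 / (1 - \<theta>) + 1) * A \<le> M * A" using M A0 by (rule mult_right_mono)
  have "\<theta> * (r * j\<^sup>2) - M * A \<le> - (1 + \<epsilon>) * (j * m) + r * j\<^sup>2 - \<epsilon> * ((a1 + a2)\<^sup>2 / S)"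
    using y m2 X epsX MA by (simp add: algebra_simps)
  then show ?thesis unfolding S_def r_def A_def m_def .
qed

lemma face_bnd_pointwise:
  fixes T :: "'n::finite smplx set"
  assumes adjF: "adj T F = {E1}" and Fb: "F \<in> boundary_faces T" and Fni: "F \<notin> interior_faces T"
    and t: "tau \<alpha>0 CT K E1 F > 0" and n: "norm (nrm E1 F) = 1"
    and eps: "\<epsilon> \<in> {-1, 0, 1}" and th: "0 \<le> \<theta>" "\<theta> < 1" and M: "1 / (1 - \<theta>) \<le> M"
  shows "\<theta> * (rho0 T \<alpha>0 CT K F * (jmp T vh F x \<bullet> jmp T vh F x))
           - M * (\<Sum>E\<in>adj T F. (kgrad K vh E x \<bullet> nrm E F)\<^sup>2 / tau \<alpha>0 CT K E F)
         \<le> - (1 + \<epsilon>) * (wavg T \<alpha>0 CT K (kgrad K vh) F x \<bullet> jmp T vh F x)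
           + rho0 T \<alpha>0 CT K F * (jmp T vh F x \<bullet> jmp T vh F x)
           - \<epsilon> * (if F \<in> interior_faces T then rho1 T \<alpha>0 CT K F *
                 (jmpv T (kgrad K vh) F x * jmpv T (kgrad K vh) F x) else 0)"
proof -
  define n1 where "n1 = nrm E1 F"
  define v where "v = vh E1 x"
  define a where "a = kgrad K vh E1 x \<bullet> n1"
  define t1 where "t1 = tau \<alpha>0 CT K E1 F"
  have the: "(THE E. E \<in> adj T F) = E1" unfolding adjF by simp
  have r0: "rho0 T \<alpha>0 CT K F = t1" unfolding rho0_def t1_def using Fb the by simp
  have jm: "jmp T vh F x = v *\<^sub>R n1" unfolding jmp_def adjF v_def n1_def by simp
  have nn: "n1 \<bullet> n1 = 1" using n unfolding n1_def by (simp add: power2_norm_eq_inner[symmetric])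
  have jj: "jmp T vh F x \<bullet> jmp T vh F x = v\<^sup>2" unfolding jm using nn by (simp add: power2_eq_square)
  have wa: "wavg T \<alpha>0 CT K (kgrad K vh) F x \<bullet> jmp T vh F x = v * a"
    unfolding wavg_def jm a_def using Fb the by simp
  have sm: "(\<Sum>E\<in>adj T F. (kgrad K vh E x \<bullet> nrm E F)\<^sup>2 / tau \<alpha>0 CT K E F) = a\<^sup>2 / t1"
    unfolding adjF a_def t1_def n1_def by simp
  have "\<theta> * (t1 * v\<^sup>2) - M * (a\<^sup>2 / t1) \<le> - (1 + \<epsilon>) * (v * a) + t1 * v\<^sup>2"
    by (rule bnd_ineq[OF t[folded t1_def] eps th M])
  then show ?thesis unfolding r0 jj wa sm using Fni by simp
qed

lemma face_int_pointwise:
  fixes T :: "'n::finite smplx set"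
  assumes adjF: "adj T F = {E1, E2}" and ne: "E1 \<noteq> E2"
    and Fi: "F \<in> interior_faces T" and Fnb: "F \<notin> boundary_faces T"
    and t1: "tau \<alpha>0 CT K E1 F > 0" and t2: "tau \<alpha>0 CT K E2 F > 0"
    and n: "norm (nrm E1 F) = 1" and n2: "nrm E2 F = nrm E1 F \<or> nrm E2 F = - nrm E1 F"
    and eps: "\<epsilon> \<in> {-1, 0, 1}" and th: "0 \<le> \<theta>" "\<theta> < 1" and M: "1 / (1 - \<theta>) + 1 \<le> M"
  shows "\<theta> * (rho0 T \<alpha>0 CT K F * (jmp T vh F x \<bullet> jmp T vh F x))
           - M * (\<Sum>E\<in>adj T F. (kgrad K vh E x \<bullet> nrm E F)\<^sup>2 / tau \<alpha>0 CT K E F)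
         \<le> - (1 + \<epsilon>) * (wavg T \<alpha>0 CT K (kgrad K vh) F x \<bullet> jmp T vh F x)
           + rho0 T \<alpha>0 CT K F * (jmp T vh F x \<bullet> jmp T vh F x)
           - \<epsilon> * (if F \<in> interior_faces T then rho1 T \<alpha>0 CT K F *
                 (jmpv T (kgrad K vh) F x * jmpv T (kgrad K vh) F x) else 0)"
proof -
  define n1 where "n1 = nrm E1 F"
  define B1 where "B1 = kgrad K vh E1 x"
  define B2 where "B2 = kgrad K vh E2 x"
  define v1 where "v1 = vh E1 x"
  define v2 where "v2 = vh E2 x"
  define \<tau>1 where "\<tau>1 = tau \<alpha>0 CT K E1 F"
  define \<tau>2 where "\<tau>2 = tau \<alpha>0 CT K E2 F"
  obtain \<sigma> :: real where sg: "\<sigma> = 1 \<or> \<sigma> = -1" and n2s: "nrm E2 F = \<sigma> *\<^sub>R n1"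
    using n2 unfolding n1_def by (metis scaleR_one scaleR_minus1_left)
  have sg2: "\<sigma>\<^sup>2 = 1" using sg by auto
  have sgsg: "\<sigma> * \<sigma> = 1" using sg by auto
  define a1 where "a1 = B1 \<bullet> n1"
  define a2 where "a2 = B2 \<bullet> nrm E2 F"
  define j where "j = v1 + \<sigma> * v2"
  have nn: "n1 \<bullet> n1 = 1" using n unfolding n1_def by (simp add: power2_norm_eq_inner[symmetric])
  have tS: "tauS T \<alpha>0 CT K F = \<tau>1 + \<tau>2" unfolding tauS_def adjF \<tau>1_def \<tau>2_def using ne by simp
  have r0: "rho0 T \<alpha>0 CT K F = \<tau>1 * \<tau>2 / (\<tau>1 + \<tau>2)"
    unfolding rho0_def using Fnb ne by (simp add: adjF tS \<tau>1_def \<tau>2_def)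
  have r1: "rho1 T \<alpha>0 CT K F = 1 / (\<tau>1 + \<tau>2)" unfolding rho1_def tS ..
  have jm: "jmp T vh F x = j *\<^sub>R n1"
    unfolding jmp_def adjF using ne by (simp add: n2s j_def v1_def v2_def n1_def scaleR_add_left)
  have jj: "jmp T vh F x \<bullet> jmp T vh F x = j\<^sup>2" unfolding jm using nn by (simp add: power2_eq_square)
  have B2n1: "B2 \<bullet> n1 = \<sigma> * a2"
  proof -
    have "a2 = \<sigma> * (B2 \<bullet> n1)" unfolding a2_def n2s by simp
    then have "\<sigma> * a2 = (\<sigma> * \<sigma>) * (B2 \<bullet> n1)" by simp
    then show ?thesis using sgsg by simp
  qed
  have pos: "\<tau>1 + \<tau>2 > 0" using t1 t2 unfolding \<tau>1_def \<tau>2_def by simp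
  have wv: "wavg T \<alpha>0 CT K (kgrad K vh) F x = (\<tau>2 / (\<tau>1 + \<tau>2)) *\<^sub>R B1 + (\<tau>1 / (\<tau>1 + \<tau>2)) *\<^sub>R B2"
    unfolding wavg_def using Fnb ne by (simp add: adjF tS \<tau>1_def \<tau>2_def B1_def B2_def)
  have wa: "wavg T \<alpha>0 CT K (kgrad K vh) F x \<bullet> jmp T vh F x = j * ((\<tau>2 * a1 + \<tau>1 * \<sigma> * a2) / (\<tau>1 + \<tau>2))"
  proof -
    have "wavg T \<alpha>0 CT K (kgrad K vh) F x \<bullet> jmp T vh F x
        = j * ((\<tau>2 / (\<tau>1 + \<tau>2)) * (B1 \<bullet> n1) + (\<tau>1 / (\<tau>1 + \<tau>2)) * (B2 \<bullet> n1))"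
      unfolding wv jm by (simp add: inner_add_left algebra_simps)
    also have "\<dots> = j * ((\<tau>2 * a1 + \<tau>1 * \<sigma> * a2) / (\<tau>1 + \<tau>2))"
      unfolding B2n1 a1_def by (simp add: add_divide_distrib)
    finally show ?thesis .
  qed
  have jv: "jmpv T (kgrad K vh) F x = a1 + a2"
    unfolding jmpv_def adjF using ne by (simp add: a1_def a2_def B1_def B2_def n1_def)
  have sm: "(\<Sum>E\<in>adj T F. (kgrad K vh E x \<bullet> nrm E F)\<^sup>2 / tau \<alpha>0 CT K E F) = a1\<^sup>2 / \<tau>1 + a2\<^sup>2 / \<tau>2"
    unfolding adjF using ne by (simp add: a1_def a2_def B1_def B2_def n1_def \<tau>1_def \<tau>2_def)
  have main: "\<theta> * ((\<tau>1 * \<tau>2 / (\<tau>1 + \<tau>2)) * j\<^sup>2) - M * (a1\<^sup>2 / \<tau>1 + a2\<^sup>2 / \<tau>2)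
     \<le> - (1 + \<epsilon>) * (j * ((\<tau>2 * a1 + \<tau>1 * \<sigma> * a2) / (\<tau>1 + \<tau>2))) + (\<tau>1 * \<tau>2 / (\<tau>1 + \<tau>2)) * j\<^sup>2
        - \<epsilon> * ((a1 + a2)\<^sup>2 / (\<tau>1 + \<tau>2))"
    by (rule int_ineq[OF t1[folded \<tau>1_def] t2[folded \<tau>2_def] eps sg2 th M])
  have "rho1 T \<alpha>0 CT K F * (jmpv T (kgrad K vh) F x * jmpv T (kgrad K vh) F x) = (a1 + a2)\<^sup>2 / (\<tau>1 + \<tau>2)"
    unfolding r1 jv by (simp add: power2_eq_square)
  then show ?thesis unfolding r0 jj wa sm using Fi main by simp
qed

lemma adj_cases:
  fixes T :: "'n::finite smplx set"
  assumes cm: "conforming_mesh T \<Omega>" and F: "F \<in> mesh_faces T"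
  shows "(\<exists>E1. adj T F = {E1} \<and> F \<in> boundary_faces T \<and> F \<notin> interior_faces T) \<or>
         (\<exists>E1 E2. E1 \<noteq> E2 \<and> adj T F = {E1, E2} \<and> F \<in> interior_faces T \<and> F \<notin> boundary_faces T)"
proof -
  have fT: "finite T" using cm unfolding conforming_mesh_def by auto
  have fA: "finite (adj T F)" unfolding adj_def using fT by simp
  obtain E where "E \<in> T" "F \<in> faces_of E" using F unfolding mesh_faces_def by blast
  then have "E \<in> adj T F" unfolding adj_def faces_of_def by auto
  then have c1: "card (adj T F) \<ge> 1" using fA by (metis One_nat_def Suc_leI card_gt_0_iff empty_iff)
  have c2: "card (adj T F) \<le> 2" by (rule card_adj_le2[OF cm F])
  show ?thesis
  proof (cases "card (adj T F) = 1")
    case True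
    then obtain E1 where "adj T F = {E1}" using card_1_singleton_iff[of "adj T F"] by auto
    moreover have "F \<in> boundary_faces T" "F \<notin> interior_faces T"
      using True F unfolding boundary_faces_def interior_faces_def by auto
    ultimately show ?thesis by blast
  next
    case False
    then have c: "card (adj T F) = 2" using c1 c2 by simp
    then obtain E1 E2 where "adj T F = {E1, E2}" "E1 \<noteq> E2" using card_2_iff[of "adj T F"] by auto
    moreover have "F \<in> interior_faces T" "F \<notin> boundary_faces T"
      using c F unfolding boundary_faces_def interior_faces_def by auto
    ultimately show ?thesis by blast
  qed
qed

lemma cont_wavg:
  fixes T :: "'n::finite smplx set"
  assumes "\<And>E. E \<in> adj T F \<Longrightarrow> continuous_on UNIV (b E)" and "adj T F \<noteq> {}" and "finite (adj T F)"
  shows "continuous_on UNIV (wavg T \<alpha>0 CT K b F)"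
proof (cases "F \<in> boundary_faces T")
  case True
  then have "card (adj T F) = 1" unfolding boundary_faces_def by simp
  then obtain E1 where E1: "adj T F = {E1}" using card_1_singleton_iff[of "adj T F"] by auto
  have "wavg T \<alpha>0 CT K b F = b E1" unfolding wavg_def using True E1 by (auto intro!: ext)
  then show ?thesis using assms(1) E1 by simp
next
  case False
  then have "wavg T \<alpha>0 CT K b F = (\<lambda>x. \<Sum>E\<in>adj T F. ((tauS T \<alpha>0 CT K F - tau \<alpha>0 CT K E F) / tauS T \<alpha>0 CT K F) *\<^sub>R b E x)"
    unfolding wavg_def by (auto intro!: ext)
  then show ?thesis using assms(1) by (simp add: continuous_on_sum continuous_on_scaleR continuous_on_const)
qed

lemma fi_lin3:
  fixes F :: "'n::finite pt set"
  assumes "finite F" "continuous_on UNIV f" "continuous_on UNIV g" "continuous_on UNIV h"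
  shows "face_int F n (\<lambda>x. a * f x + b * g x + c * h x) = a * face_int F n f + b * face_int F n g + c * face_int F n h"
proof -
  have c1: "continuous_on UNIV (\<lambda>x. a * f x)" using assms(2) by (intro continuous_intros)
  have c2: "continuous_on UNIV (\<lambda>x. b * g x)" using assms(3) by (intro continuous_intros)
  have c3: "continuous_on UNIV (\<lambda>x. c * h x)" using assms(4) by (intro continuous_intros)
  have c12: "continuous_on UNIV (\<lambda>x. a * f x + b * g x)" using assms(2,3) by (intro continuous_intros)
  have "face_int F n (\<lambda>x. a * f x + b * g x + c * h x) = face_int F n (\<lambda>x. a * f x + b * g x) + face_int F n (\<lambda>x. c * h x)"
    by (rule fi_add[OF assms(1) c12 c3])
  also have "face_int F n (\<lambda>x. a * f x + b * g x) = face_int F n (\<lambda>x. a * f x) + face_int F n (\<lambda>x. b * g x)"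
    by (rule fi_add[OF assms(1) c1 c2])
  finally show ?thesis by (simp add: fi_cmul)
qed

lemma fi_zero: "face_int F n (\<lambda>x. 0) = 0"
  unfolding face_int_alt by simp

lemma face_integral_ineq:
  fixes T :: "'n::finite smplx set"
  assumes cm: "conforming_mesh T \<Omega>" and F: "F \<in> mesh_faces T"
    and cont: "\<And>E. E \<in> T \<Longrightarrow> continuous_on UNIV (vh E) \<and> continuous_on UNIV (grad (vh E))"
    and taupos: "\<And>E. E \<in> adj T F \<Longrightarrow> tau \<alpha>0 CT K E F > 0"
    and nrm1: "\<And>E. E \<in> adj T F \<Longrightarrow> norm (nrm E F) = 1"
    and nsh: "\<And>E E'. E \<in> adj T F \<Longrightarrow> E' \<in> adj T F \<Longrightarrow> nrm E' F = nrm E F \<or> nrm E' F = - nrm E F"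
    and eps: "\<epsilon> \<in> {-1, 0, 1}" and th: "0 \<le> \<theta>" "\<theta> < 1" and M: "1 / (1 - \<theta>) + 1 \<le> M"
  shows "\<theta> * fint T F (\<lambda>x. rho0 T \<alpha>0 CT K F * (jmp T vh F x \<bullet> jmp T vh F x))
           - M * (\<Sum>E\<in>adj T F. (1 / tau \<alpha>0 CT K E F) * fint T F (\<lambda>x. (kgrad K vh E x \<bullet> nrm E F)\<^sup>2))
         \<le> - (1 + \<epsilon>) * fint T F (\<lambda>x. wavg T \<alpha>0 CT K (kgrad K vh) F x \<bullet> jmp T vh F x)
           + fint T F (\<lambda>x. rho0 T \<alpha>0 CT K F * (jmp T vh F x \<bullet> jmp T vh F x))
           - \<epsilon> * (if F \<in> interior_faces T then fint T F (\<lambda>x. rho1 T \<alpha>0 CT K F *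
                 (jmpv T (kgrad K vh) F x * jmpv T (kgrad K vh) F x)) else 0)"
proof -
  have fT: "finite T" using cm unfolding conforming_mesh_def by auto
  have fA: "finite (adj T F)" unfolding adj_def using fT by simp
  have AT: "E \<in> T" if "E \<in> adj T F" for E using that unfolding adj_def by auto
  obtain E0 where E0: "E0 \<in> T" "F \<in> faces_of E0" using F unfolding mesh_faces_def by blast
  have sE0: "is_simplex E0" using cm E0 unfolding conforming_mesh_def by auto
  have fF: "finite F"
  proof -
    obtain p where p: "E0 - F = {p}" "E0 = insert p F" "p \<notin> F" "finite E0" "F \<subseteq> E0"
      "card F = CARD('n)" "card E0 = CARD('n) + 1" "\<not> affine_dependent E0" "\<not> affine_dependent F"
      by (rule face_split[OF sE0 E0(2)])
    then show ?thesis using finite_subset by blast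
  qed
  have Ane: "adj T F \<noteq> {}" using E0 unfolding adj_def faces_of_def by auto
  have ckg: "continuous_on UNIV (kgrad K vh E)" if "E \<in> adj T F" for E
    unfolding kgrad_def using cont[OF AT[OF that]] by (intro cont_mv) simp
  have cvh: "continuous_on UNIV (vh E)" if "E \<in> adj T F" for E using cont[OF AT[OF that]] by simp
  have cjmp: "continuous_on UNIV (jmp T vh F)"
    unfolding jmp_def[abs_def] using cvh by (intro continuous_on_sum continuous_on_scaleR continuous_on_const) auto
  have cjmpv: "continuous_on UNIV (jmpv T (kgrad K vh) F)"
    unfolding jmpv_def[abs_def] using ckg by (intro continuous_on_sum continuous_on_inner continuous_on_const) auto
  have cwavg: "continuous_on UNIV (wavg T \<alpha>0 CT K (kgrad K vh) F)"
    by (rule cont_wavg[OF ckg Ane fA])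
  define f1 where "f1 = (\<lambda>x. wavg T \<alpha>0 CT K (kgrad K vh) F x \<bullet> jmp T vh F x)"
  define f2 where "f2 = (\<lambda>x. rho0 T \<alpha>0 CT K F * (jmp T vh F x \<bullet> jmp T vh F x))"
  define f3 where "f3 = (\<lambda>x. if F \<in> interior_faces T then rho1 T \<alpha>0 CT K F *
                 (jmpv T (kgrad K vh) F x * jmpv T (kgrad K vh) F x) else 0)"
  define aE where "aE = (\<lambda>E x. (kgrad K vh E x \<bullet> nrm E F)\<^sup>2)"
  define R where "R = (\<lambda>x. \<Sum>E\<in>adj T F. (1 / tau \<alpha>0 CT K E F) * aE E x)"
  have c1: "continuous_on UNIV f1" unfolding f1_def using cwavg cjmp by (intro continuous_intros)
  have c2: "continuous_on UNIV f2" unfolding f2_def using cjmp by (intro continuous_intros)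
  have c3: "continuous_on UNIV f3"
  proof (cases "F \<in> interior_faces T")
    case True
    then show ?thesis unfolding f3_def using cjmpv by (simp, intro continuous_intros)
  next
    case False
    then show ?thesis unfolding f3_def by (simp add: continuous_on_const)
  qed
  have caE: "continuous_on UNIV (aE E)" if "E \<in> adj T F" for E
    unfolding aE_def using ckg[OF that] by (intro continuous_intros)
  have cR: "continuous_on UNIV R" unfolding R_def using caE by (intro continuous_on_sum continuous_intros) auto
  have cL: "continuous_on UNIV (\<lambda>x. \<theta> * f2 x + (- M) * R x + 0 * f1 x)"
    using c1 c2 cR by (intro continuous_intros)
  have cRH: "continuous_on UNIV (\<lambda>x. (- (1 + \<epsilon>)) * f1 x + 1 * f2 x + (- \<epsilon>) * f3 x)"
    using c1 c2 c3 by (intro continuous_intros)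
  have pw: "\<theta> * f2 x + (- M) * R x + 0 * f1 x \<le> (- (1 + \<epsilon>)) * f1 x + 1 * f2 x + (- \<epsilon>) * f3 x" for x
  proof -
    have Rx: "R x = (\<Sum>E\<in>adj T F. (kgrad K vh E x \<bullet> nrm E F)\<^sup>2 / tau \<alpha>0 CT K E F)"
      unfolding R_def aE_def by (rule sum.cong) auto
    have M1: "1 / (1 - \<theta>) \<le> M" using M by simp
    from adj_cases[OF cm F] show ?thesis
    proof (elim disjE exE conjE)
      fix E1 assume a: "adj T F = {E1}" "F \<in> boundary_faces T" "F \<notin> interior_faces T"
      have "E1 \<in> adj T F" using a by simp
      from face_bnd_pointwise[OF a taupos[OF this] nrm1[OF this] eps th M1, of vh x]
      show ?thesis unfolding f1_def f2_def f3_def Rx by simp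
    next
      fix E1 E2 assume a: "E1 \<noteq> E2" "adj T F = {E1, E2}" "F \<in> interior_faces T" "F \<notin> boundary_faces T"
      have e1: "E1 \<in> adj T F" and e2: "E2 \<in> adj T F" using a by auto
      from face_int_pointwise[OF a(2) a(1) a(3) a(4) taupos[OF e1] taupos[OF e2] nrm1[OF e1] nsh[OF e1 e2] eps th M, of vh x]
      show ?thesis unfolding f1_def f2_def f3_def Rx by simp
    qed
  qed
  have "face_int F (fnrm T F) (\<lambda>x. \<theta> * f2 x + (- M) * R x + 0 * f1 x)
      \<le> face_int F (fnrm T F) (\<lambda>x. (- (1 + \<epsilon>)) * f1 x + 1 * f2 x + (- \<epsilon>) * f3 x)"
    by (rule fi_le[OF fF cL cRH pw])
  also have "face_int F (fnrm T F) (\<lambda>x. (- (1 + \<epsilon>)) * f1 x + 1 * f2 x + (- \<epsilon>) * f3 x)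
     = (- (1 + \<epsilon>)) * fint T F f1 + 1 * fint T F f2 + (- \<epsilon>) * fint T F f3"
    unfolding fint_def by (rule fi_lin3[OF fF c1 c2 c3])
  also have "face_int F (fnrm T F) (\<lambda>x. \<theta> * f2 x + (- M) * R x + 0 * f1 x)
     = \<theta> * fint T F f2 + (- M) * fint T F R + 0 * fint T F f1"
    unfolding fint_def by (rule fi_lin3[OF fF c2 cR c1])
  also have "fint T F R = (\<Sum>E\<in>adj T F. (1 / tau \<alpha>0 CT K E F) * fint T F (aE E))"
  proof -
    have cc: "continuous_on UNIV (\<lambda>x. (1 / tau \<alpha>0 CT K E F) * aE E x)" if "E \<in> adj T F" for E
      using caE[OF that] by (intro continuous_intros)
    have "fint T F R = (\<Sum>E\<in>adj T F. fint T F (\<lambda>x. (1 / tau \<alpha>0 CT K E F) * aE E x))"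
      unfolding R_def fint_def by (rule fi_sum[OF fF fA cc])
    also have "\<dots> = (\<Sum>E\<in>adj T F. (1 / tau \<alpha>0 CT K E F) * fint T F (aE E))"
      unfolding fint_def by (rule sum.cong[OF refl]) (rule fi_cmul)
    finally show ?thesis .
  qed
  also have "fint T F f3 = (if F \<in> interior_faces T then fint T F (\<lambda>x. rho1 T \<alpha>0 CT K F *
                 (jmpv T (kgrad K vh) F x * jmpv T (kgrad K vh) F x)) else 0)"
    unfolding f3_def fint_def by (simp add: fi_zero)
  finally show ?thesis unfolding f1_def f2_def aE_def by simp
qed


lemma face_facts:
  fixes T :: "'n::finite smplx set"
  assumes cm: "conforming_mesh T \<Omega>" and E: "E \<in> T" and FE: "F \<in> faces_of E"
  shows "is_simplex E" "finite F" "norm (nrm E F) = 1" "F \<in> mesh_faces T" "E \<in> adj T F"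
proof -
  show sE: "is_simplex E" using cm E unfolding conforming_mesh_def by auto
  obtain p where p: "E - F = {p}" "E = insert p F" "p \<notin> F" "finite E" "F \<subseteq> E"
    "card F = CARD('n)" "card E = CARD('n) + 1" "\<not> affine_dependent E" "\<not> affine_dependent F"
    by (rule face_split[OF sE FE])
  show "finite F" using p(4,5) finite_subset by blast
  show "norm (nrm E F) = 1" using nrm_props[OF sE FE] by blast
  show "F \<in> mesh_faces T" unfolding mesh_faces_def using E FE by blast
  show "E \<in> adj T F" unfolding adj_def using E p(5) by blast
qed

lemma adj_facts:
  fixes T :: "'n::finite smplx set"
  assumes F: "F \<in> mesh_faces T" and E: "E \<in> adj T F"
  shows "E \<in> T" "F \<in> faces_of E"
proof -
  show "E \<in> T" using E unfolding adj_def by auto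
  have "card F = CARD('n)" using F unfolding mesh_faces_def faces_of_def by auto
  then show "F \<in> faces_of E" using E unfolding adj_def faces_of_def by auto
qed

lemma tau_pos:
  fixes T :: "'n::finite smplx set"
  assumes cm: "conforming_mesh T \<Omega>" and E: "E \<in> T" and FE: "F \<in> faces_of E"
    and co: "coef_ok T K kmin kmax" and tc: "trace_const k T CT" and a0: "0 < \<alpha>0"
  shows "tau \<alpha>0 CT K E F > 0" "kEF K E F > 0"
proof -
  have n: "norm (nrm E F) = 1" by (rule face_facts(3)[OF cm E FE])
  have "kmin * (norm (nrm E F))\<^sup>2 \<le> kEF K E F" using co E unfolding coef_ok_def kEF_def by blast
  moreover have "kmin > 0" using co unfolding coef_ok_def by simp
  ultimately show kp: "kEF K E F > 0" using n by simp
  have h: "hE E > 0" by (rule hE_pos[OF face_facts(1)[OF cm E FE]])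
  have ct: "CT > 0" using tc unfolding trace_const_def by simp
  show "tau \<alpha>0 CT K E F > 0" unfolding tau_def using kp h ct a0 by simp
qed

lemma fint_eq:
  fixes T :: "'n::finite smplx set"
  assumes cm: "conforming_mesh T \<Omega>" and E: "E \<in> T" and FE: "F \<in> faces_of E"
  shows "fint T F g = face_int F (nrm E F) g"
proof -
  have sE: "is_simplex E" and fF: "finite F" and n: "norm (nrm E F) = 1" and EA: "E \<in> adj T F"
    and Fm: "F \<in> mesh_faces T" using face_facts[OF cm E FE] by auto
  define E0 where "E0 = (SOME E. E \<in> adj T F)"
  have E0: "E0 \<in> adj T F" unfolding E0_def using EA by (rule someI)
  have E0T: "E0 \<in> T" and FE0: "F \<in> faces_of E0" using adj_facts[OF Fm E0] by auto
  have sE0: "is_simplex E0" using cm E0T unfolding conforming_mesh_def by auto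
  have fn: "fnrm T F = nrm E0 F" unfolding fnrm_def E0_def ..
  from nrm_shared[OF sE FE sE0 FE0] show ?thesis
  proof
    assume "nrm E0 F = nrm E F" then show ?thesis unfolding fint_def fn by simp
  next
    assume "nrm E0 F = - nrm E F" then show ?thesis unfolding fint_def fn using fi_neg[OF fF n] by simp
  qed
qed

lemma elem_face_bound:
  fixes T :: "'n::finite smplx set"
  assumes cm: "conforming_mesh T \<Omega>" and E: "E \<in> T" and FE: "F \<in> faces_of E"
    and co: "coef_ok T K kmin kmax" and tc: "trace_const k T CT" and a0: "0 < \<alpha>0"
    and vh: "vh \<in> Vh k T"
  shows "(1 / tau \<alpha>0 CT K E F) * fint T F (\<lambda>x. (kgrad K vh E x \<bullet> nrm E F)\<^sup>2)
     \<le> (1 / \<alpha>0) * elem_int E (\<lambda>x. grad (vh E) x \<bullet> (K E *v grad (vh E) x))"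
proof -
  have sE: "is_simplex E" and fF: "finite F" and n: "norm (nrm E F) = 1"
    using face_facts[OF cm E FE] by auto
  have fE: "finite E" using sE unfolding is_simplex_def by (metis card.infinite add_is_0 one_neq_zero)
  have tp: "tau \<alpha>0 CT K E F > 0" and kp: "kEF K E F > 0" using tau_pos[OF cm E FE co tc a0] by auto
  have h: "hE E > 0" by (rule hE_pos[OF sE])
  have ct: "CT > 0" using tc unfolding trace_const_def by simp
  have pv: "poly_deg k (vh E)" using vh E unfolding Vh_def by auto
  define n where "n = nrm E F"
  define w where "w = (\<lambda>x. (K E *v grad (vh E) x) \<bullet> n)"
  define Q where "Q = (\<lambda>x. grad (vh E) x \<bullet> (K E *v grad (vh E) x))"
  have pw: "poly_deg k w" unfolding w_def by (rule poly_normal_flux[OF pv])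
  have cw: "continuous_on UNIV w" by (rule poly_cont[OF pw])
  have cg: "continuous_on UNIV (grad (vh E))" by (rule grad_cont[OF pv])
  have cQ: "continuous_on UNIV Q" unfolding Q_def using cg by (intro continuous_intros cont_mv)
  have cw2: "continuous_on UNIV (\<lambda>x. (w x)\<^sup>2)" using cw by (intro continuous_intros)
  have cQ2: "continuous_on UNIV (\<lambda>x. kEF K E F * Q x)" using cQ by (intro continuous_intros)
  have kg: "(\<lambda>x. (kgrad K vh E x \<bullet> nrm E F)\<^sup>2) = (\<lambda>x. (w x)\<^sup>2)"
    unfolding kgrad_def w_def n_def ..
  have sym: "transpose (K E) = K E" and pd: "\<And>\<xi>. kmin * (norm \<xi>)\<^sup>2 \<le> \<xi> \<bullet> (K E *v \<xi>)" and km: "kmin > 0"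
    using co E unfolding coef_ok_def by auto
  have trace: "face_int F n (\<lambda>x. (w x)\<^sup>2) \<le> CT\<^sup>2 / hE E * elem_int E (\<lambda>x. (w x)\<^sup>2)"
    using tc E FE pw unfolding trace_const_def n_def by blast
  have cs: "(w x)\<^sup>2 \<le> kEF K E F * Q x" for x
    unfolding w_def Q_def kEF_def n_def by (rule kcs[OF sym pd km n])
  have ei: "elem_int E (\<lambda>x. (w x)\<^sup>2) \<le> kEF K E F * elem_int E Q"
    using ei_le[OF fE cw2 cQ2 cs] by (simp add: ei_cmul)
  have Q0: "Q x \<ge> 0" for x
  proof -
    have "0 \<le> kmin * (norm (grad (vh E) x))\<^sup>2" using km by simp
    also have "\<dots> \<le> Q x" unfolding Q_def by (rule pd)
    finally show ?thesis .
  qed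
  have fe: "fint T F (\<lambda>x. (w x)\<^sup>2) = face_int F n (\<lambda>x. (w x)\<^sup>2)"
    unfolding n_def by (rule fint_eq[OF cm E FE])
  have "fint T F (\<lambda>x. (w x)\<^sup>2) \<le> CT\<^sup>2 / hE E * (kEF K E F * elem_int E Q)"
    unfolding fe using trace mult_left_mono[OF ei, of "CT\<^sup>2 / hE E"] h by simp
  then have "(1 / tau \<alpha>0 CT K E F) * fint T F (\<lambda>x. (w x)\<^sup>2)
      \<le> (1 / tau \<alpha>0 CT K E F) * (CT\<^sup>2 / hE E * (kEF K E F * elem_int E Q))"
    using tp by (intro mult_left_mono) auto
  also have "(1 / tau \<alpha>0 CT K E F) * (CT\<^sup>2 / hE E * (kEF K E F * elem_int E Q)) = (1 / \<alpha>0) * elem_int E Q"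
    unfolding tau_def using a0 ct h kp by (simp add: field_simps)
  finally show ?thesis unfolding kg Q_def .
qed


lemma finite_mesh_faces:
  fixes T :: "'n::finite smplx set"
  assumes cm: "conforming_mesh T \<Omega>"
  shows "finite (mesh_faces T)"
proof -
  have fT: "finite T" using cm unfolding conforming_mesh_def by auto
  have "finite (faces_of E)" if "E \<in> T" for E
  proof -
    have "is_simplex E" using cm that unfolding conforming_mesh_def by auto
    then have "finite E" unfolding is_simplex_def by (metis card.infinite add_is_0 one_neq_zero)
    then show ?thesis unfolding faces_of_def by (rule finite_subset[rotated, OF finite_Pow_iff[THEN iffD2]]) auto
  qed
  then show ?thesis unfolding mesh_faces_def using fT by blast
qed

lemma vol_nonneg:
  fixes T :: "'n::finite smplx set"
  assumes cm: "conforming_mesh T \<Omega>" and co: "coef_ok T K kmin kmax" and vh: "vh \<in> Vh k T"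
  shows "0 \<le> (\<Sum>E\<in>T. elem_int E (\<lambda>x. grad (vh E) x \<bullet> (K E *v grad (vh E) x)))"
proof (rule sum_nonneg)
  fix E assume E: "E \<in> T"
  have "is_simplex E" using cm E unfolding conforming_mesh_def by auto
  then have fE: "finite E" unfolding is_simplex_def by (metis card.infinite add_is_0 one_neq_zero)
  have pv: "poly_deg k (vh E)" using vh E unfolding Vh_def by auto
  have cg: "continuous_on UNIV (grad (vh E))" by (rule grad_cont[OF pv])
  have pd: "\<And>\<xi>. kmin * (norm \<xi>)\<^sup>2 \<le> \<xi> \<bullet> (K E *v \<xi>)" and km: "kmin > 0"
    using co E unfolding coef_ok_def by auto
  show "0 \<le> elem_int E (\<lambda>x. grad (vh E) x \<bullet> (K E *v grad (vh E) x))"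
  proof (rule ei_nonneg[OF fE])
    show "continuous_on UNIV (\<lambda>x. grad (vh E) x \<bullet> (K E *v grad (vh E) x))"
      using cg by (intro continuous_intros cont_mv)
    fix x
    have "0 \<le> kmin * (norm (grad (vh E) x))\<^sup>2" using km by simp
    also have "\<dots> \<le> grad (vh E) x \<bullet> (K E *v grad (vh E) x)" by (rule pd)
    finally show "0 \<le> grad (vh E) x \<bullet> (K E *v grad (vh E) x)" .
  qed
qed

lemma rho0_nonneg:
  fixes T :: "'n::finite smplx set"
  assumes cm: "conforming_mesh T \<Omega>" and F: "F \<in> mesh_faces T"
    and tp: "\<And>E. E \<in> adj T F \<Longrightarrow> tau \<alpha>0 CT K E F > 0"
  shows "0 \<le> rho0 T \<alpha>0 CT K F"
  using adj_cases[OF cm F]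
proof (elim disjE exE conjE)
  fix E1 assume a: "adj T F = {E1}" "F \<in> boundary_faces T" "F \<notin> interior_faces T"
  have "(THE E. E \<in> adj T F) = E1" unfolding a by simp
  then show ?thesis unfolding rho0_def using a tp[of E1] by simp
next
  fix E1 E2 assume a: "E1 \<noteq> E2" "adj T F = {E1, E2}" "F \<in> interior_faces T" "F \<notin> boundary_faces T"
  have "0 \<le> (\<Prod>E\<in>adj T F. tau \<alpha>0 CT K E F)" using tp by (intro prod_nonneg) (simp add: less_imp_le)
  moreover have "0 \<le> tauS T \<alpha>0 CT K F" unfolding tauS_def using tp by (intro sum_nonneg) (simp add: less_imp_le)
  ultimately show ?thesis unfolding rho0_def using a by simp
qed

lemma snorm_nonneg:
  fixes T :: "'n::finite smplx set"
  assumes cm: "conforming_mesh T \<Omega>" and co: "coef_ok T K kmin kmax" and tc: "trace_const k T CT"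
    and a0: "0 < \<alpha>0" and vh: "vh \<in> Vh k T"
  shows "0 \<le> seminorm0_sq T \<alpha>0 CT K vh"
  unfolding seminorm0_sq_def
proof (rule sum_nonneg)
  fix F assume F: "F \<in> mesh_faces T"
  obtain E0 where E0: "E0 \<in> T" "F \<in> faces_of E0" using F unfolding mesh_faces_def by blast
  have fF: "finite F" using face_facts[OF cm E0] by auto
  have tp: "tau \<alpha>0 CT K E F > 0" if "E \<in> adj T F" for E
    using tau_pos[OF cm adj_facts[OF F that] co tc a0] by simp
  have r: "0 \<le> rho0 T \<alpha>0 CT K F" by (rule rho0_nonneg[OF cm F tp])
  have cvh: "continuous_on UNIV (vh E)" if "E \<in> adj T F" for E
    using poly_cont adj_facts(1)[OF F that] vh unfolding Vh_def by blast
  have cjmp: "continuous_on UNIV (jmp T vh F)"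
    unfolding jmp_def[abs_def] using cvh by (intro continuous_on_sum continuous_on_scaleR continuous_on_const) auto
  show "0 \<le> fint T F (\<lambda>x. rho0 T \<alpha>0 CT K F * (norm (jmp T vh F x))\<^sup>2)"
    unfolding fint_def by (rule fi_nonneg[OF fF]) (use cjmp r in \<open>auto intro!: continuous_intros\<close>)
qed

lemma stab_main:
  fixes T :: "'n::finite smplx set"
  assumes cm: "conforming_mesh T \<Omega>" and co: "coef_ok T K kmin kmax" and tc: "trace_const k T CT"
    and a0: "0 < \<alpha>0" and vh: "vh \<in> Vh k T"
    and eps: "\<epsilon> \<in> {-1, 0, 1}" and th: "0 \<le> \<theta>" "\<theta> < 1" and M: "1 / (1 - \<theta>) + 1 \<le> M"
  shows "(\<Sum>E\<in>T. elem_int E (\<lambda>x. grad (vh E) x \<bullet> (K E *v grad (vh E) x)))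
           - M * (real (eta0 T) / \<alpha>0) * (\<Sum>E\<in>T. elem_int E (\<lambda>x. grad (vh E) x \<bullet> (K E *v grad (vh E) x)))
           + \<theta> * seminorm0_sq T \<alpha>0 CT K vh
         \<le> a_h \<epsilon> T \<alpha>0 CT K vh vh"
proof -
  define vol where "vol = (\<Sum>E\<in>T. elem_int E (\<lambda>x. grad (vh E) x \<bullet> (K E *v grad (vh E) x)))"
  define I where "I = (\<lambda>E. elem_int E (\<lambda>x. grad (vh E) x \<bullet> (K E *v grad (vh E) x)))"
  have fT: "finite T" using cm unfolding conforming_mesh_def by auto
  have fMF: "finite (mesh_faces T)" by (rule finite_mesh_faces[OF cm])
  have M0: "M \<ge> 0" using M th by (smt (verit) divide_nonneg_nonneg)
  define f1 where "f1 = (\<lambda>F x. wavg T \<alpha>0 CT K (kgrad K vh) F x \<bullet> jmp T vh F x)"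
  define f2 where "f2 = (\<lambda>F x. rho0 T \<alpha>0 CT K F * (jmp T vh F x \<bullet> jmp T vh F x))"
  define f3 where "f3 = (\<lambda>F x. rho1 T \<alpha>0 CT K F * (jmpv T (kgrad K vh) F x * jmpv T (kgrad K vh) F x))"
  define g where "g = (\<lambda>E F. (1 / tau \<alpha>0 CT K E F) * fint T F (\<lambda>x. (kgrad K vh E x \<bullet> nrm E F)\<^sup>2))"
  define X where "X = (\<lambda>F. - (1 + \<epsilon>) * fint T F (f1 F) + fint T F (f2 F)
       - \<epsilon> * (if F \<in> interior_faces T then fint T F (f3 F) else 0))"
  have avol: "a_vol T K vh vh = vol"
    unfolding a_vol_def vol_def kgrad_def by (rule sum.cong[OF refl]) (simp add: inner_commute)
  have ac: "a_c T \<alpha>0 CT K vh vh = - (\<Sum>F\<in>mesh_faces T. fint T F (f1 F))"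
    unfolding a_c_def f1_def ..
  have intsum: "(\<Sum>F\<in>interior_faces T. fint T F (f3 F))
      = (\<Sum>F\<in>mesh_faces T. if F \<in> interior_faces T then fint T F (f3 F) else 0)"
  proof -
    have "(\<Sum>F\<in>interior_faces T. fint T F (f3 F)) = (\<Sum>F\<in>mesh_faces T. if card (adj T F) = 2 then fint T F (f3 F) else 0)"
      unfolding interior_faces_def by (rule sum.inter_filter[OF fMF])
    also have "\<dots> = (\<Sum>F\<in>mesh_faces T. if F \<in> interior_faces T then fint T F (f3 F) else 0)"
      by (rule sum.cong[OF refl]) (simp add: interior_faces_def)
    finally show ?thesis .
  qed
  have sh: "s_h \<epsilon> T \<alpha>0 CT K vh vh = (\<Sum>F\<in>mesh_faces T. fint T F (f2 F))
      - \<epsilon> * (\<Sum>F\<in>mesh_faces T. if F \<in> interior_faces T then fint T F (f3 F) else 0)"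
    unfolding s_h_def f2_def f3_def intsum[unfolded f3_def] ..
  have ah: "a_h \<epsilon> T \<alpha>0 CT K vh vh = vol + (\<Sum>F\<in>mesh_faces T. X F)"
  proof -
    have "(\<Sum>F\<in>mesh_faces T. X F) = - (1 + \<epsilon>) * (\<Sum>F\<in>mesh_faces T. fint T F (f1 F))
       + (\<Sum>F\<in>mesh_faces T. fint T F (f2 F))
       - \<epsilon> * (\<Sum>F\<in>mesh_faces T. if F \<in> interior_faces T then fint T F (f3 F) else 0)"
      unfolding X_def by (simp add: sum.distrib sum_subtractf sum_distrib_left)
    then show ?thesis unfolding a_h_def avol ac sh by (simp add: algebra_simps)
  qed
  have Xb: "\<theta> * fint T F (f2 F) - M * (\<Sum>E\<in>adj T F. g E F) \<le> X F" if F: "F \<in> mesh_faces T" for F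
  proof -
    have cont: "continuous_on UNIV (vh E) \<and> continuous_on UNIV (grad (vh E))" if "E \<in> T" for E
      using poly_cont grad_cont vh that unfolding Vh_def by blast
    have tp: "tau \<alpha>0 CT K E F > 0" if "E \<in> adj T F" for E
      using tau_pos[OF cm adj_facts[OF F that] co tc a0] by simp
    have n1: "norm (nrm E F) = 1" if "E \<in> adj T F" for E
      using face_facts(3)[OF cm adj_facts[OF F that]] .
    have nsh: "nrm E' F = nrm E F \<or> nrm E' F = - nrm E F" if "E \<in> adj T F" "E' \<in> adj T F" for E E'
      using nrm_shared[OF face_facts(1)[OF cm adj_facts[OF F that(1)]] adj_facts(2)[OF F that(1)]
                          face_facts(1)[OF cm adj_facts[OF F that(2)]] adj_facts(2)[OF F that(2)]] .
    show ?thesis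
      using face_integral_ineq[OF cm F cont tp n1 nsh eps th M]
      unfolding X_def f1_def f2_def f3_def g_def by simp
  qed
  have sumX: "\<theta> * (\<Sum>F\<in>mesh_faces T. fint T F (f2 F)) - M * (\<Sum>F\<in>mesh_faces T. \<Sum>E\<in>adj T F. g E F)
      \<le> (\<Sum>F\<in>mesh_faces T. X F)"
  proof -
    have "(\<Sum>F\<in>mesh_faces T. \<theta> * fint T F (f2 F) - M * (\<Sum>E\<in>adj T F. g E F)) \<le> (\<Sum>F\<in>mesh_faces T. X F)"
      by (rule sum_mono) (rule Xb)
    then show ?thesis by (simp add: sum_subtractf sum_distrib_left)
  qed
  have sn: "(\<Sum>F\<in>mesh_faces T. fint T F (f2 F)) = seminorm0_sq T \<alpha>0 CT K vh"
    unfolding seminorm0_sq_def f2_def by (simp add: power2_norm_eq_inner)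
  have swap: "(\<Sum>F\<in>mesh_faces T. \<Sum>E\<in>adj T F. g E F) = (\<Sum>E\<in>T. \<Sum>F\<in>faces_of E. g E F)"
  proof -
    have "(\<Sum>F\<in>mesh_faces T. \<Sum>E\<in>adj T F. g E F) = (\<Sum>F\<in>mesh_faces T. \<Sum>E\<in>{E. E \<in> T \<and> F \<subseteq> E}. g E F)"
      unfolding adj_def by simp
    also have "\<dots> = (\<Sum>E\<in>T. \<Sum>F\<in>{F. F \<in> mesh_faces T \<and> F \<subseteq> E}. g E F)"
      by (rule sum.swap_restrict[OF fMF fT])
    also have "\<dots> = (\<Sum>E\<in>T. \<Sum>F\<in>faces_of E. g E F)"
    proof (rule sum.cong[OF refl])
      fix E assume E: "E \<in> T"
      have "{F. F \<in> mesh_faces T \<and> F \<subseteq> E} = faces_of E"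
      proof (intro set_eqI iffI)
        fix F assume "F \<in> {F. F \<in> mesh_faces T \<and> F \<subseteq> E}"
        then have "F \<in> mesh_faces T" "E \<in> adj T F" using E unfolding adj_def by auto
        then show "F \<in> faces_of E" by (rule adj_facts(2))
      next
        fix F assume "F \<in> faces_of E"
        then show "F \<in> {F. F \<in> mesh_faces T \<and> F \<subseteq> E}"
          using face_facts(4)[OF cm E] unfolding faces_of_def by auto
      qed
      then show "(\<Sum>F\<in>{F. F \<in> mesh_faces T \<and> F \<subseteq> E}. g E F) = (\<Sum>F\<in>faces_of E. g E F)" by simp
    qed
    finally show ?thesis .
  qed
  have gb: "(\<Sum>E\<in>T. \<Sum>F\<in>faces_of E. g E F) \<le> (real (eta0 T) / \<alpha>0) * vol"
  proof -
    have "(\<Sum>E\<in>T. \<Sum>F\<in>faces_of E. g E F) \<le> (\<Sum>E\<in>T. \<Sum>F\<in>faces_of E. (1 / \<alpha>0) * I E)"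
      unfolding g_def I_def
      by (intro sum_mono) (rule elem_face_bound[OF cm _ _ co tc a0 vh]; assumption)
    also have "\<dots> = (\<Sum>E\<in>T. real (card (faces_of E)) * ((1 / \<alpha>0) * I E))" by simp
    also have "\<dots> \<le> (\<Sum>E\<in>T. real (eta0 T) * ((1 / \<alpha>0) * I E))"
    proof (rule sum_mono)
      fix E assume E: "E \<in> T"
      have "card (faces_of E) \<le> eta0 T" unfolding eta0_def using fT E by (intro Max_ge) auto
      moreover have "0 \<le> I E"
        using vol_nonneg[OF cm co vh] sum_nonneg_leq_bound
        unfolding I_def
      proof -
        have "is_simplex E" using cm E unfolding conforming_mesh_def by auto
        then have fE: "finite E" unfolding is_simplex_def by (metis card.infinite add_is_0 one_neq_zero)
        have pv: "poly_deg k (vh E)" using vh E unfolding Vh_def by auto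
        have cg: "continuous_on UNIV (grad (vh E))" by (rule grad_cont[OF pv])
        have pd: "\<And>\<xi>. kmin * (norm \<xi>)\<^sup>2 \<le> \<xi> \<bullet> (K E *v \<xi>)" and km: "kmin > 0"
          using co E unfolding coef_ok_def by auto
        show "0 \<le> elem_int E (\<lambda>x. grad (vh E) x \<bullet> (K E *v grad (vh E) x))"
        proof (rule ei_nonneg[OF fE])
          show "continuous_on UNIV (\<lambda>x. grad (vh E) x \<bullet> (K E *v grad (vh E) x))"
            using cg by (intro continuous_intros cont_mv)
          fix x
          have "0 \<le> kmin * (norm (grad (vh E) x))\<^sup>2" using km by simp
          also have "\<dots> \<le> grad (vh E) x \<bullet> (K E *v grad (vh E) x)" by (rule pd)
          finally show "0 \<le> grad (vh E) x \<bullet> (K E *v grad (vh E) x)" .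
        qed
      qed
      moreover have "0 \<le> 1 / \<alpha>0" using a0 by simp
      ultimately show "real (card (faces_of E)) * ((1 / \<alpha>0) * I E) \<le> real (eta0 T) * ((1 / \<alpha>0) * I E)"
        by (intro mult_right_mono) auto
    qed
    also have "\<dots> = (real (eta0 T) / \<alpha>0) * vol" unfolding vol_def I_def by (simp add: sum_distrib_left)
    finally show ?thesis .
  qed
  have "vol - M * (real (eta0 T) / \<alpha>0) * vol + \<theta> * seminorm0_sq T \<alpha>0 CT K vh
      \<le> vol + (\<theta> * (\<Sum>F\<in>mesh_faces T. fint T F (f2 F)) - M * (\<Sum>F\<in>mesh_faces T. \<Sum>E\<in>adj T F. g E F))"
    using mult_left_mono[OF gb M0] unfolding sn swap by simp
  also have "\<dots> \<le> a_h \<epsilon> T \<alpha>0 CT K vh vh" unfolding ah using sumX by simp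
  finally show ?thesis unfolding vol_def .
qed


lemma arith_c:
  fixes c :: real assumes pc: "1 + 2 * c > 0"
  shows "1 - (1 + 2 / (1 + 2 * c)) * c - (1 - 2 * c) / (2 * (1 + 2 * c)) = (1 - 2 * c) / 2"
proof -
  have q: "1 + 2 * c \<noteq> 0" using pc by simp
  have "2 * c / (1 + 2 * c) + (1 - 2 * c) / (2 * (1 + 2 * c)) = 1 / 2"
  proof -
    have a: "2 * c / (1 + 2 * c) = (2 * (2 * c)) / (2 * (1 + 2 * c))"
      by (rule mult_divide_mult_cancel_left[symmetric]) simp
    have b: "(2 * (2 * c)) / (2 * (1 + 2 * c)) + (1 - 2 * c) / (2 * (1 + 2 * c)) = (2 * (2 * c) + (1 - 2 * c)) / (2 * (1 + 2 * c))"
      by (rule add_divide_distrib[symmetric])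
    have d: "2 * (2 * c) + (1 - 2 * c) = 1 + 2 * c" by simp
    have e: "(1 + 2 * c) / (2 * (1 + 2 * c)) = 1 / 2" using q by simp
    show ?thesis unfolding a b d e ..
  qed
  moreover have "1 - (1 + 2 / (1 + 2 * c)) * c - (1 - 2 * c) / (2 * (1 + 2 * c))
     = 1 - c - (2 * c / (1 + 2 * c) + (1 - 2 * c) / (2 * (1 + 2 * c)))"
    by (simp add: algebra_simps)
  ultimately show ?thesis by simp
qed

theorem mainTheorem8:
  fixes C0 :: real
  assumes "CARD('n::finite) \<in> {2, 3}"
    and "0 < C0" and "C0\<^sup>2 < 1/2"
  shows "\<exists>Csta>0. \<forall>(\<Omega> :: 'n pt set) (T :: 'n smplx set) (K :: 'n coef) kmin kmax
            (k :: nat) CT \<alpha>0 (\<epsilon> :: real) (vh :: 'n dgfun).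
     lipschitz_domain \<Omega> \<longrightarrow> conforming_mesh T \<Omega> \<longrightarrow> hmax T \<le> 1 \<longrightarrow>
     coef_ok T K kmin kmax \<longrightarrow> k \<ge> 1 \<longrightarrow> trace_const k T CT \<longrightarrow>
     0 < \<alpha>0 \<longrightarrow> C0 = sqrt (real (eta0 T) / \<alpha>0) \<longrightarrow>
     \<epsilon> \<in> {-1, 0, 1} \<longrightarrow> vh \<in> Vh k T \<longrightarrow>
     a_h \<epsilon> T \<alpha>0 CT K vh vh \<ge> Csta * tnorm_sq T \<alpha>0 CT K vh"
proof -
  define c where "c = C0\<^sup>2"
  have c0: "0 < c" unfolding c_def using assms(2) by simp
  have c1: "c < 1/2" unfolding c_def using assms(3) by simp
  define \<theta> :: real where "\<theta> = (1 - 2 * c) / 2"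
  define M :: real where "M = 1 / (1 - \<theta>) + 1"
  define Csta :: real where "Csta = (1 - 2 * c) / (2 * (1 + 2 * c))"
  have th0: "0 \<le> \<theta>" and th1: "\<theta> < 1" unfolding \<theta>_def using c0 c1 by auto
  have Mge: "1 / (1 - \<theta>) + 1 \<le> M" unfolding M_def by simp
  have pc: "1 + 2 * c > 0" using c0 by simp
  have omt: "1 - \<theta> = (1 + 2 * c) / 2" unfolding \<theta>_def by (simp add: field_simps)
  have Mv: "M = 1 + 2 / (1 + 2 * c)" unfolding M_def omt by simp
  have Cpos: "Csta > 0" unfolding Csta_def using c1 pc by simp
  have Cth: "Csta \<le> \<theta>"
  proof -
    have "Csta = \<theta> / (1 + 2 * c)" unfolding Csta_def \<theta>_def by simp
    also have "\<dots> \<le> \<theta>"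
    proof -
      have "\<theta> * 1 \<le> \<theta> * (1 + 2 * c)" using th0 c0 by (intro mult_left_mono) auto
      then show ?thesis using pc by (simp add: divide_le_eq)
    qed
    finally show ?thesis .
  qed
  have CM: "Csta \<le> 1 - M * c"
  proof -
    have "1 - M * c - Csta = (1 - 2 * c) / 2"
      unfolding Mv Csta_def by (rule arith_c[OF pc])
    then show ?thesis using c1 by simp
  qed
  show ?thesis
  proof (intro exI[of _ Csta] conjI allI impI)
    show "0 < Csta" by (rule Cpos)
    fix \<Omega> :: "'n pt set" and T :: "'n smplx set" and K :: "'n coef" and kmin kmax :: real
      and k :: nat and CT \<alpha>0 :: real and \<epsilon> :: real and vh :: "'n dgfun"
    assume ld: "lipschitz_domain \<Omega>" and cm: "conforming_mesh T \<Omega>" and hm: "hmax T \<le> 1"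
      and co: "coef_ok T K kmin kmax" and k1: "k \<ge> 1" and tc: "trace_const k T CT"
      and a0: "0 < \<alpha>0" and C0e: "C0 = sqrt (real (eta0 T) / \<alpha>0)"
      and eps: "\<epsilon> \<in> {-1, 0, 1}" and vh: "vh \<in> Vh k T"
    have ce: "real (eta0 T) / \<alpha>0 = c"
      unfolding c_def C0e using a0 by simp
    define vol where "vol = (\<Sum>E\<in>T. elem_int E (\<lambda>x. grad (vh E) x \<bullet> (K E *v grad (vh E) x)))"
    define sn where "sn = seminorm0_sq T \<alpha>0 CT K vh"
    have st: "vol - M * c * vol + \<theta> * sn \<le> a_h \<epsilon> T \<alpha>0 CT K vh vh"
      using stab_main[OF cm co tc a0 vh eps th0 th1 Mge] unfolding vol_def sn_def ce .
    have v0: "0 \<le> vol" unfolding vol_def by (rule vol_nonneg[OF cm co vh])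
    have s0: "0 \<le> sn" unfolding sn_def by (rule snorm_nonneg[OF cm co tc a0 vh])
    have tn: "tnorm_sq T \<alpha>0 CT K vh = vol + sn" unfolding tnorm_sq_def vol_def sn_def ..
    have "Csta * vol \<le> (1 - M * c) * vol" using CM v0 by (rule mult_right_mono)
    moreover have "Csta * sn \<le> \<theta> * sn" using Cth s0 by (rule mult_right_mono)
    ultimately have "Csta * (vol + sn) \<le> vol - M * c * vol + \<theta> * sn" by (simp add: algebra_simps)
    then show "Csta * tnorm_sq T \<alpha>0 CT K vh \<le> a_h \<epsilon> T \<alpha>0 CT K vh vh" unfolding tn using st by simp
  qed
qed

end
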